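(* Let $r\in\mathbb{N}\setminus\{0\}$ and let \[ G=\left\langle a_1,\ldots,a_r,t_1,\ldots,t_r \;\middle|\; a_ia_j=a_ja_i,\ t_it_j=t_jt_i,\ t_i^2=1,\ t_i^{-1}a_jt_i=\begin{cases}a_j & i\neq j\\ a_i^{-1} & i=j\end{cases}\ (1\le i,j\le r)\right\rangle . \] Let $s\in\mathbb{N}\setminus\{0\}$. Then $\alpha_{G\times\mathbb{Z}^s}\sim (n\mapsto n^{r+1})$. In particular, for every $m,k\in\mathbb{N}\setminus\{0\}$ with $m\geq k$, there is a virtually abelian group of rank $m$ whose automorphic growth rate is $n\mapsto n^k$.
   Context: For a finitely generated group $G$ with finite generating set $\Sigma$, the automorphic growth function $\alpha_{G,\Sigma}\colon\mathbb{N}\to\mathbb{N}$ sends $n$ to the number of orbits of the natural action of $\operatorname{Aut}(G)$ on $G$ that contain an element of word length at most $n$ with respect to $\Sigma$. For non-decreasing non-zero functions $f,g\colon\mathbb{N}\to\mathbb{N}$ write $f\preccurlyeq g$ if there is $\lambda\in\mathbb{N}\setminus\{0\}$ with $f(n)\le\lambda g(\lambda n+\lambda)+\lambda$ for all $n$, and $f\sim g$ if $f\preccurlyeq g$ and $g\preccurlyeq f$. The $\sim$-class of $\alpha_{G,\Sigma}$ does not depend on $\Sigma$ and is denoted $\alpha_G$ (the automorphic growth rate). The rank of a finitely generated virtually abelian group is the rank of a finite-index free abelian subgroup. *)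

theory Defs
  imports "HOL-Algebra.Coset" "HOL-Algebra.Generated_Groups"
begin

definition wordlen :: "('a, 'b) monoid_scheme \<Rightarrow> 'a set \<Rightarrow> 'a \<Rightarrow> nat" where
  "wordlen G S g = (LEAST n. \<exists>ws. length ws = n \<and> set ws \<subseteq> S \<union> m_inv G ` S
                              \<and> foldr (\<lambda>x y. x \<otimes>\<^bsub>G\<^esub> y) ws \<one>\<^bsub>G\<^esub> = g)"

definition aut_orbit :: "('a, 'b) monoid_scheme \<Rightarrow> 'a \<Rightarrow> 'a set" where
  "aut_orbit G g = {\<phi> g | \<phi>. \<phi> \<in> iso G G}"

definition autgrowth :: "('a, 'b) monoid_scheme \<Rightarrow> 'a set \<Rightarrow> nat \<Rightarrow> nat" where
  "autgrowth G S n = card (aut_orbit G ` {g \<in> carrier G. wordlen G S g \<le> n})"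

definition gen_set :: "('a, 'b) monoid_scheme \<Rightarrow> 'a set \<Rightarrow> bool" where
  "gen_set G S \<longleftrightarrow> finite S \<and> S \<subseteq> carrier G \<and> generate G S = carrier G"

definition growth_le :: "(nat \<Rightarrow> nat) \<Rightarrow> (nat \<Rightarrow> nat) \<Rightarrow> bool" where
  "growth_le f g \<longleftrightarrow> (\<exists>c::nat. c \<noteq> 0 \<and> (\<forall>n. f n \<le> c * g (c * n + c) + c))"

definition growth_equiv :: "(nat \<Rightarrow> nat) \<Rightarrow> (nat \<Rightarrow> nat) \<Rightarrow> bool" where
  "growth_equiv f g \<longleftrightarrow> growth_le f g \<and> growth_le g f"

definition Zpow :: "nat \<Rightarrow> (nat \<Rightarrow> int) monoid" where
  "Zpow m = \<lparr>carrier = {v. \<forall>i\<ge>m. v i = 0}, mult = (\<lambda>v w i. v i + w i), one = (\<lambda>_. 0)\<rparr>"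

definition virt_abelian_rank :: "('a, 'b) monoid_scheme \<Rightarrow> nat \<Rightarrow> bool" where
  "virt_abelian_rank G m \<longleftrightarrow> group G \<and>
     (\<exists>H. subgroup H G \<and> finite (rcosets\<^bsub>G\<^esub> H) \<and> G\<lparr>carrier := H\<rparr> \<cong> Zpow m)"

type_synonym elem = "(nat \<Rightarrow> int) \<times> (nat \<Rightarrow> bool) \<times> (nat \<Rightarrow> int)"

text \<open>Concrete model of G x Z^s: a triple (a, t, z) stands for
  (a_1^{a 0} ... a_r^{a (r-1)}) (t_1^{t 0} ... t_r^{t (r-1)}) times z in Z^s.  Generators: a_i = (e_i,0,0), t_i = (0,e_i,0).\<close>
definition GZ :: "nat \<Rightarrow> nat \<Rightarrow> elem monoid" where
  "GZ r s = \<lparr>carrier = {(a, t, z). (\<forall>i\<ge>r. a i = 0 \<and> \<not> t i) \<and> (\<forall>i\<ge>s. z i = 0)},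
            mult = (\<lambda>(a, t, z) (b, u, w).
                      ((\<lambda>i. a i + (if t i then - b i else b i)), (\<lambda>i. t i \<noteq> u i), (\<lambda>i. z i + w i))),
            one = ((\<lambda>_. 0), (\<lambda>_. False), (\<lambda>_. 0))\<rparr>"

end

theory Submission
  imports Defs
begin


definition act :: "(nat \<Rightarrow> bool) \<Rightarrow> (nat \<Rightarrow> int) \<Rightarrow> nat \<Rightarrow> int" where
  "act t b = (\<lambda>i. if t i then - b i else b i)"

lemma GZ_carrier: "(a, t, z) \<in> carrier (GZ r s) \<longleftrightarrow> (\<forall>i\<ge>r. a i = 0 \<and> \<not> t i) \<and> (\<forall>i\<ge>s. z i = 0)"
  by (simp add: GZ_def)

lemma GZ_mult: "(a, t, z) \<otimes>\<^bsub>GZ r s\<^esub> (b, u, w) =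
   ((\<lambda>i. a i + (if t i then - b i else b i)), (\<lambda>i. t i \<noteq> u i), (\<lambda>i. z i + w i))"
  by (simp add: GZ_def)

lemma GZ_one: "\<one>\<^bsub>GZ r s\<^esub> = ((\<lambda>_. 0), (\<lambda>_. False), (\<lambda>_. 0))"
  by (simp add: GZ_def)

lemma GZ_group: "group (GZ r s)"
proof (rule groupI)
  fix x y assume "x \<in> carrier (GZ r s)" "y \<in> carrier (GZ r s)"
  then show "x \<otimes>\<^bsub>GZ r s\<^esub> y \<in> carrier (GZ r s)"
    by (cases x; cases y) (auto simp: GZ_carrier GZ_mult)
next
  show "\<one>\<^bsub>GZ r s\<^esub> \<in> carrier (GZ r s)" by (simp add: GZ_one GZ_carrier)
next
  fix x y z assume "x \<in> carrier (GZ r s)" "y \<in> carrier (GZ r s)" "z \<in> carrier (GZ r s)"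
  then show "x \<otimes>\<^bsub>GZ r s\<^esub> y \<otimes>\<^bsub>GZ r s\<^esub> z = x \<otimes>\<^bsub>GZ r s\<^esub> (y \<otimes>\<^bsub>GZ r s\<^esub> z)"
    by (cases x; cases y; cases z) (auto simp: GZ_mult fun_eq_iff)
next
  fix x assume "x \<in> carrier (GZ r s)"
  then show "\<one>\<^bsub>GZ r s\<^esub> \<otimes>\<^bsub>GZ r s\<^esub> x = x"
    by (cases x) (auto simp: GZ_mult GZ_one fun_eq_iff)
next
  fix x assume x: "x \<in> carrier (GZ r s)"
  obtain a t z where xe: "x = (a,t,z)" by (cases x)
  let ?y = "((\<lambda>i. if t i then a i else - a i), t, (\<lambda>i. - z i))"
  have "?y \<in> carrier (GZ r s)" using x xe by (auto simp: GZ_carrier)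
  moreover have "?y \<otimes>\<^bsub>GZ r s\<^esub> x = \<one>\<^bsub>GZ r s\<^esub>"
    using xe by (auto simp: GZ_mult GZ_one fun_eq_iff)
  ultimately show "\<exists>y\<in>carrier (GZ r s). y \<otimes>\<^bsub>GZ r s\<^esub> x = \<one>\<^bsub>GZ r s\<^esub>" by blast
qed

lemma GZ_inv: assumes "(a,t,z) \<in> carrier (GZ r s)"
  shows "inv\<^bsub>GZ r s\<^esub> (a,t,z) = ((\<lambda>i. if t i then a i else - a i), t, (\<lambda>i. - z i))"
proof -
  interpret group "GZ r s" by (rule GZ_group)
  show ?thesis
    apply (rule inv_equality)
    using assms by (auto simp: GZ_mult GZ_one GZ_carrier fun_eq_iff)
qed



definition hasw :: "('a, 'b) monoid_scheme \<Rightarrow> 'a set \<Rightarrow> nat \<Rightarrow> 'a \<Rightarrow> bool" where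
  "hasw G S n g = (\<exists>ws. length ws = n \<and> set ws \<subseteq> S \<union> m_inv G ` S
                              \<and> foldr (\<lambda>x y. x \<otimes>\<^bsub>G\<^esub> y) ws \<one>\<^bsub>G\<^esub> = g)"

lemma wordlen_le: "hasw G S n g \<Longrightarrow> wordlen G S g \<le> n"
  unfolding wordlen_def hasw_def by (rule Least_le) 

lemma wordlen_ex: "hasw G S n g \<Longrightarrow> hasw G S (wordlen G S g) g"
  unfolding wordlen_def hasw_def by (rule LeastI)

context group begin

lemma foldr_carrier: "S \<subseteq> carrier G \<Longrightarrow> set ws \<subseteq> S \<union> m_inv G ` S \<Longrightarrow>
   foldr (\<lambda>x y. x \<otimes> y) ws \<one> \<in> carrier G"
  by (induction ws) auto

lemma foldr_append: "S \<subseteq> carrier G \<Longrightarrow> set xs \<subseteq> S \<union> m_inv G ` S \<Longrightarrow> set ys \<subseteq> S \<union> m_inv G ` S \<Longrightarrow>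
   foldr (\<lambda>x y. x \<otimes> y) (xs @ ys) \<one> = foldr (\<lambda>x y. x \<otimes> y) xs \<one> \<otimes> foldr (\<lambda>x y. x \<otimes> y) ys \<one>"
proof (induction xs)
  case Nil
  then show ?case using foldr_carrier[of S ys] by simp
next
  case (Cons a xs)
  have "a \<in> carrier G" using Cons.prems by auto
  then show ?case using Cons foldr_carrier[of S ys] foldr_carrier[of S xs] by (simp add: m_assoc)
qed

lemma hasw_carrier: "S \<subseteq> carrier G \<Longrightarrow> hasw G S n g \<Longrightarrow> g \<in> carrier G"
  unfolding hasw_def using foldr_carrier by blast

lemma hasw_mult: assumes "S \<subseteq> carrier G" "hasw G S m x" "hasw G S n y"
  shows "hasw G S (m + n) (x \<otimes> y)"
proof -
  obtain xs where xs: "length xs = m" "set xs \<subseteq> S \<union> m_inv G ` S" "foldr (\<lambda>x y. x \<otimes> y) xs \<one> = x"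
    using assms(2) unfolding hasw_def by blast
  obtain ys where ys: "length ys = n" "set ys \<subseteq> S \<union> m_inv G ` S" "foldr (\<lambda>x y. x \<otimes> y) ys \<one> = y"
    using assms(3) unfolding hasw_def by blast
  show ?thesis unfolding hasw_def
    apply (rule exI[of _ "xs @ ys"])
    using xs ys foldr_append[OF assms(1) xs(2) ys(2)] by auto
qed

lemma gen_hasw: assumes "S \<subseteq> carrier G" "g \<in> generate G S" shows "\<exists>n. hasw G S n g"
  using assms(2)
proof induction
  case one
  then show ?case unfolding hasw_def by (rule exI[of _ 0]) auto
next
  case (incl h)
  then show ?case unfolding hasw_def using assms(1) by (intro exI[of _ 1] exI[of _ "[h]"]) auto
next
  case (inv h)
  then show ?case unfolding hasw_def using assms(1) by (intro exI[of _ 1] exI[of _ "[inv h]"]) auto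
next
  case (eng h1 h2)
  then show ?case using hasw_mult[OF assms(1)] by blast
qed

lemma wordlen_mult: assumes "S \<subseteq> carrier G" "generate G S = carrier G" "x \<in> carrier G" "y \<in> carrier G"
  shows "wordlen G S (x \<otimes> y) \<le> wordlen G S x + wordlen G S y"
proof -
  obtain m where "hasw G S m x" using gen_hasw assms by blast
  then have hx: "hasw G S (wordlen G S x) x" by (rule wordlen_ex)
  obtain n where "hasw G S n y" using gen_hasw assms by blast
  then have hy: "hasw G S (wordlen G S y) y" by (rule wordlen_ex)
  show ?thesis by (rule wordlen_le, rule hasw_mult[OF assms(1) hx hy])
qed

lemma wordlen_one: "wordlen G S \<one> = 0"
proof -
  have "hasw G S 0 \<one>" unfolding hasw_def by auto
  then show ?thesis using wordlen_le by fastforce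
qed

lemma hasw_bound:
  assumes "S \<subseteq> carrier G" "\<And>x. x \<in> S \<union> m_inv G ` S \<Longrightarrow> N x \<le> C"
    "\<And>x y. x \<in> carrier G \<Longrightarrow> y \<in> carrier G \<Longrightarrow> N (x \<otimes> y) \<le> N x + N y"
    "N \<one> = (0::nat)" "hasw G S n g"
  shows "N g \<le> C * n"
proof -
  obtain ws where ws: "length ws = n" "set ws \<subseteq> S \<union> m_inv G ` S" "foldr (\<lambda>x y. x \<otimes> y) ws \<one> = g"
    using assms(5) unfolding hasw_def by blast
  have "N (foldr (\<lambda>x y. x \<otimes> y) ws \<one>) \<le> C * length ws" using ws(2)
  proof (induction ws)
    case Nil then show ?case using assms(4) by simp
  next
    case (Cons a ws)
    have a: "a \<in> carrier G" using Cons.prems assms(1) by auto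
    have "N (foldr (\<lambda>x y. x \<otimes> y) (a # ws) \<one>) \<le> N a + N (foldr (\<lambda>x y. x \<otimes> y) ws \<one>)"
      using assms(3)[OF a foldr_carrier[OF assms(1)]] Cons.prems by simp
    also have "\<dots> \<le> C + C * length ws" using Cons assms(2) by (intro add_mono) auto
    finally show ?case by simp
  qed
  then show ?thesis using ws by simp
qed

end

lemma aut_orbit_self: "g \<in> aut_orbit G g"
  unfolding aut_orbit_def using iso_set_refl by fastforce

lemma aut_orbit_eq: assumes "group G" "g \<in> carrier G" "h \<in> aut_orbit G g"
  shows "aut_orbit G h = aut_orbit G g"
proof -
  interpret group G by fact
  obtain \<phi> where phi: "\<phi> \<in> iso G G" "h = \<phi> g" using assms(3) unfolding aut_orbit_def by blast
  have inj: "inj_on \<phi> (carrier G)" using phi(1) by (simp add: iso_iff)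
  have psi: "inv_into (carrier G) \<phi> \<in> iso G G" using iso_set_sym phi(1) by blast
  have ig: "inv_into (carrier G) \<phi> h = g" using phi inj assms(2) by (simp add: inv_into_f_f)
  show ?thesis
  proof
    show "aut_orbit G h \<subseteq> aut_orbit G g"
    proof
      fix y assume "y \<in> aut_orbit G h"
      then obtain \<chi> where "\<chi> \<in> iso G G" "y = \<chi> h" unfolding aut_orbit_def by blast
      then have "\<chi> \<circ> \<phi> \<in> iso G G" "y = (\<chi> \<circ> \<phi>) g" using iso_set_trans phi by auto
      then show "y \<in> aut_orbit G g" unfolding aut_orbit_def by blast
    qed
  next
    show "aut_orbit G g \<subseteq> aut_orbit G h"
    proof
      fix y assume "y \<in> aut_orbit G g"
      then obtain \<chi> where "\<chi> \<in> iso G G" "y = \<chi> g" unfolding aut_orbit_def by blast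
      then have "\<chi> \<circ> inv_into (carrier G) \<phi> \<in> iso G G" "y = (\<chi> \<circ> inv_into (carrier G) \<phi>) h"
        using iso_set_trans psi ig by auto
      then show "y \<in> aut_orbit G h" unfolding aut_orbit_def by blast
    qed
  qed
qed

lemma aut_orbit_trans: assumes "group G" "g \<in> carrier G" "h \<in> aut_orbit G g" "k \<in> aut_orbit G h"
  shows "k \<in> aut_orbit G g"
  using aut_orbit_eq[OF assms(1-3)] assms(4) by simp



lemma zmap_iso:
  assumes add: "\<And>z w. \<psi> (\<lambda>i. z i + w i) = (\<lambda>i. \<psi> z i + \<psi> w i)"
    and cl: "\<And>z. (\<forall>i\<ge>s. z i = 0) \<Longrightarrow> (\<forall>i\<ge>s. \<psi> z i = 0)"
    and cl': "\<And>z. (\<forall>i\<ge>s. z i = 0) \<Longrightarrow> (\<forall>i\<ge>s. \<psi>' z i = 0)"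
    and inv1: "\<And>z. (\<forall>i\<ge>s. z i = 0) \<Longrightarrow> \<psi>' (\<psi> z) = z"
    and inv2: "\<And>z. (\<forall>i\<ge>s. z i = 0) \<Longrightarrow> \<psi> (\<psi>' z) = z"
  shows "(\<lambda>(a,t,z). (a,t,\<psi> z)) \<in> iso (GZ r s) (GZ r s)"
proof (rule isoI)
  show "(\<lambda>(a,t,z). (a,t,\<psi> z)) \<in> hom (GZ r s) (GZ r s)"
    unfolding hom_def
  proof (intro CollectI conjI ballI)
    show "(\<lambda>(a,t,z). (a,t,\<psi> z)) \<in> carrier (GZ r s) \<rightarrow> carrier (GZ r s)"
      using cl by (auto simp: GZ_carrier)
    fix x y assume "x \<in> carrier (GZ r s)" "y \<in> carrier (GZ r s)"
    then show "(case x \<otimes>\<^bsub>GZ r s\<^esub> y of (a, t, z) \<Rightarrow> (a, t, \<psi> z)) =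
       (case x of (a, t, z) \<Rightarrow> (a, t, \<psi> z)) \<otimes>\<^bsub>GZ r s\<^esub> (case y of (a, t, z) \<Rightarrow> (a, t, \<psi> z))"
      by (cases x; cases y) (simp add: GZ_mult add)
  qed
next
  show "bij_betw (\<lambda>(a,t,z). (a,t,\<psi> z)) (carrier (GZ r s)) (carrier (GZ r s))"
  proof (rule bij_betwI[where g="\<lambda>(a,t,z). (a,t,\<psi>' z)"])
    show "(\<lambda>(a,t,z). (a,t,\<psi> z)) \<in> carrier (GZ r s) \<rightarrow> carrier (GZ r s)"
      using cl by (auto simp: GZ_carrier)
    show "(\<lambda>(a,t,z). (a,t,\<psi>' z)) \<in> carrier (GZ r s) \<rightarrow> carrier (GZ r s)"
      using cl' by (auto simp: GZ_carrier)
    fix x assume "x \<in> carrier (GZ r s)"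
    then show "(case case x of (a, t, z) \<Rightarrow> (a, t, \<psi> z) of (a, t, z) \<Rightarrow> (a, t, \<psi>' z)) = x"
      "(case case x of (a, t, z) \<Rightarrow> (a, t, \<psi>' z) of (a, t, z) \<Rightarrow> (a, t, \<psi> z)) = x"
      by (cases x; simp add: GZ_carrier inv1 inv2)+
  qed
qed

lemma zmap_orbit:
  assumes add: "\<And>z w. \<psi> (\<lambda>i. z i + w i) = (\<lambda>i. \<psi> z i + \<psi> w i)"
    and cl: "\<And>z. (\<forall>i\<ge>s. z i = 0) \<Longrightarrow> (\<forall>i\<ge>s. \<psi> z i = 0)"
    and cl': "\<And>z. (\<forall>i\<ge>s. z i = 0) \<Longrightarrow> (\<forall>i\<ge>s. \<psi>' z i = 0)"
    and inv1: "\<And>z. (\<forall>i\<ge>s. z i = 0) \<Longrightarrow> \<psi>' (\<psi> z) = z"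
    and inv2: "\<And>z. (\<forall>i\<ge>s. z i = 0) \<Longrightarrow> \<psi> (\<psi>' z) = z"
  shows "(a,t,\<psi> z) \<in> aut_orbit (GZ r s) (a,t,z)"
proof -
  have "(\<lambda>(a,t,z). (a,t,\<psi> z)) \<in> iso (GZ r s) (GZ r s)"
    by (rule zmap_iso[where \<psi>'=\<psi>']) (fact+)
  then show ?thesis unfolding aut_orbit_def by (intro CollectI exI[of _ "\<lambda>(a,t,z). (a,t,\<psi> z)"]) auto
qed

definition addop :: "nat \<Rightarrow> nat \<Rightarrow> int \<Rightarrow> (nat \<Rightarrow> int) \<Rightarrow> nat \<Rightarrow> int" where
  "addop i j c z = z(i := z i + c * z j)"

definition swapop :: "nat \<Rightarrow> nat \<Rightarrow> (nat \<Rightarrow> int) \<Rightarrow> nat \<Rightarrow> int" where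
  "swapop i j z = (\<lambda>k. z (if k = i then j else if k = j then i else k))"

lemma addop_orbit: assumes "i \<noteq> j" "i < s"
  shows "(a,t,addop i j c z) \<in> aut_orbit (GZ r s) (a,t,z)"
  by (rule zmap_orbit[where \<psi>'="addop i j (-c)"]) (use assms in \<open>auto simp: addop_def fun_eq_iff algebra_simps\<close>)

lemma swapop_orbit: assumes "i < s" "j < s"
  shows "(a,t,swapop i j z) \<in> aut_orbit (GZ r s) (a,t,z)"
  by (rule zmap_orbit[where \<psi>'="swapop i j"]) (use assms in \<open>auto simp: swapop_def fun_eq_iff\<close>)

lemma negop_orbit: "(a,t,(\<lambda>k. - z k)) \<in> aut_orbit (GZ r s) (a,t,z)"
  by (rule zmap_orbit[where \<psi>'="\<lambda>z k. - z k" and s=s]) (auto simp: fun_eq_iff)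

lemma sum_upd: fixes z :: "nat \<Rightarrow> int" and s :: nat assumes "i < s"
  shows "(\<Sum>k<s. \<bar>(z(i := v)) k\<bar>) = (\<Sum>k<s. \<bar>z k\<bar>) - \<bar>z i\<bar> + \<bar>v\<bar>"
proof -
  have "(\<Sum>k<s. \<bar>(z(i := v)) k\<bar>) = \<bar>v\<bar> + (\<Sum>k\<in>{..<s} - {i}. \<bar>(z(i := v)) k\<bar>)"
    using assms sum.remove[OF finite_lessThan[of s], of i "\<lambda>k. \<bar>(z(i := v)) k\<bar>"] by simp
  also have "(\<Sum>k\<in>{..<s} - {i}. \<bar>(z(i := v)) k\<bar>) = (\<Sum>k\<in>{..<s} - {i}. \<bar>z k\<bar>)"
    by (rule sum.cong) auto
  also have "(\<Sum>k<s. \<bar>z k\<bar>) = \<bar>z i\<bar> + (\<Sum>k\<in>{..<s} - {i}. \<bar>z k\<bar>)"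
    using assms sum.remove[OF finite_lessThan[of s], of i "\<lambda>k. \<bar>z k\<bar>"] by simp
  ultimately show ?thesis by simp
qed

lemma z_reduce:
  assumes "0 < s" "(a,t,z) \<in> carrier (GZ r s)"
  shows "\<exists>d. 0 \<le> d \<and> d \<le> (\<Sum>k<s. \<bar>z k\<bar>) \<and> (a,t,(\<lambda>k. if k = 0 then d else 0)) \<in> aut_orbit (GZ r s) (a,t,z)"
proof -
  have gr: "group (GZ r s)" by (rule GZ_group)
  have "\<forall>z. (\<forall>i\<ge>s. z i = 0) \<longrightarrow> nat (\<Sum>k<s. \<bar>z k\<bar>) = M \<longrightarrow>
     (\<exists>d. 0 \<le> d \<and> d \<le> (\<Sum>k<s. \<bar>z k\<bar>) \<and> (a,t,(\<lambda>k. if k = 0 then d else 0)) \<in> aut_orbit (GZ r s) (a,t,z))"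
    for M
  proof (induction M rule: less_induct)
    case (less M)
    show ?case
    proof (intro allI impI)
      fix z assume zc: "\<forall>i\<ge>s. z i = 0" and M: "nat (\<Sum>k<s. \<bar>z k\<bar>) = M"
      have ac: "(a,t,z) \<in> carrier (GZ r s)" using assms(2) zc by (simp add: GZ_carrier)
      show "\<exists>d. 0 \<le> d \<and> d \<le> (\<Sum>k<s. \<bar>z k\<bar>) \<and> (a,t,(\<lambda>k. if k = 0 then d else 0)) \<in> aut_orbit (GZ r s) (a,t,z)"
      proof (cases "\<exists>i j. i < s \<and> j < s \<and> i \<noteq> j \<and> z i \<noteq> 0 \<and> z j \<noteq> 0")
        case True
        then obtain i j where ij: "i < s" "j < s" "i \<noteq> j" "z i \<noteq> 0" "z j \<noteq> 0" "\<bar>z j\<bar> \<le> \<bar>z i\<bar>"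
          by (metis linorder_le_cases)
        define c :: int where "c = (if (z i > 0) = (z j > 0) then -1 else 1)"
        define z' where "z' = addop i j c z"
        have vi: "\<bar>z i + c * z j\<bar> = \<bar>z i\<bar> - \<bar>z j\<bar>" using ij unfolding c_def by auto
        have "(\<Sum>k<s. \<bar>z' k\<bar>) = (\<Sum>k<s. \<bar>z k\<bar>) - \<bar>z i\<bar> + \<bar>z i + c * z j\<bar>"
          unfolding z'_def addop_def by (rule sum_upd[OF ij(1)])
        then have s': "(\<Sum>k<s. \<bar>z' k\<bar>) = (\<Sum>k<s. \<bar>z k\<bar>) - \<bar>z j\<bar>" using vi by simp
        have z'c: "\<forall>i\<ge>s. z' i = 0" using zc ij unfolding z'_def addop_def by auto
        have pos: "0 \<le> (\<Sum>k<s. \<bar>z' k\<bar>)" by (rule sum_nonneg) auto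
        have lt: "nat (\<Sum>k<s. \<bar>z' k\<bar>) < M" using M s' ij(5) pos by simp
        obtain d where d: "0 \<le> d" "d \<le> (\<Sum>k<s. \<bar>z' k\<bar>)" "(a,t,(\<lambda>k. if k = 0 then d else 0)) \<in> aut_orbit (GZ r s) (a,t,z')"
          using less.IH[OF lt] z'c by blast
        have "(a,t,z') \<in> aut_orbit (GZ r s) (a,t,z)" unfolding z'_def by (rule addop_orbit[OF ij(3) ij(1)])
        then have "(a,t,(\<lambda>k. if k = 0 then d else 0)) \<in> aut_orbit (GZ r s) (a,t,z)"
          using aut_orbit_trans[OF gr ac] d(3) by blast
        then show ?thesis using d s' ij by (intro exI[of _ d]) auto
      next
        case False
        show ?thesis
        proof (cases "\<forall>i<s. z i = 0")
          case True
          then have "z = (\<lambda>k. if k = 0 then 0 else 0)" using zc by (auto simp: fun_eq_iff) (meson not_le)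
          then show ?thesis using aut_orbit_self by (intro exI[of _ 0]) auto
        next
          case F2: False
          then obtain i where i: "i < s" "z i \<noteq> 0" by blast
          have oth: "\<And>j. j \<noteq> i \<Longrightarrow> z j = 0" using False i zc by (metis not_le)
          have sum: "(\<Sum>k<s. \<bar>z k\<bar>) = \<bar>z i\<bar>"
          proof -
            have "(\<Sum>k<s. \<bar>z k\<bar>) = \<bar>z i\<bar> + (\<Sum>k\<in>{..<s} - {i}. \<bar>z k\<bar>)"
              using i sum.remove[OF finite_lessThan[of s], of i "\<lambda>k. \<bar>z k\<bar>"] by simp
            also have "(\<Sum>k\<in>{..<s} - {i}. \<bar>z k\<bar>) = 0" using oth by (intro sum.neutral) auto
            finally show ?thesis by simp
          qed
          define z1 where "z1 = swapop 0 i z"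
          have z1: "z1 = (\<lambda>k. if k = 0 then z i else 0)"
            unfolding z1_def swapop_def fun_eq_iff using oth by auto
          have o1: "(a,t,z1) \<in> aut_orbit (GZ r s) (a,t,z)" unfolding z1_def
            by (rule swapop_orbit[OF assms(1) i(1)])
          show ?thesis
          proof (cases "z i > 0")
            case True
            then show ?thesis using o1 z1 sum by (intro exI[of _ "z i"]) auto
          next
            case False
            have "(a,t,(\<lambda>k. - z1 k)) \<in> aut_orbit (GZ r s) (a,t,z1)" by (rule negop_orbit)
            moreover have "(\<lambda>k. - z1 k) = (\<lambda>k. if k = 0 then - z i else 0)" using z1 by auto
            ultimately have "(a,t,(\<lambda>k. if k = 0 then - z i else 0)) \<in> aut_orbit (GZ r s) (a,t,z)"
              using aut_orbit_trans[OF gr ac o1] by simp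
            then show ?thesis using False sum i by (intro exI[of _ "- z i"]) auto
          qed
        qed
      qed
    qed
  qed
  then show ?thesis using assms(2) by (auto simp: GZ_carrier)
qed



definition nrm :: "nat \<Rightarrow> nat \<Rightarrow> elem \<Rightarrow> nat" where
  "nrm r s g = (\<Sum>i<r. nat \<bar>fst g i\<bar>) + (\<Sum>i<s. nat \<bar>snd (snd g) i\<bar>)"

definition mu :: "nat \<Rightarrow> nat \<Rightarrow> elem \<Rightarrow> nat" where
  "mu r s g = nrm r s g + card {i. i < r \<and> fst (snd g) i}"

definition ea :: "nat \<Rightarrow> int \<Rightarrow> nat \<Rightarrow> int" where
  "ea i c = (\<lambda>j. if j = i then c else 0)"

definition Estd :: "nat \<Rightarrow> nat \<Rightarrow> elem set" where
  "Estd r s = {(ea i c, \<lambda>_. False, \<lambda>_. 0) | i c. i < r \<and> (c = 1 \<or> c = -1)}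
     \<union> {(\<lambda>_. 0, \<lambda>j. j = i, \<lambda>_. 0) | i. i < r}
     \<union> {(\<lambda>_. 0, \<lambda>_. False, ea i c) | i c. i < s \<and> (c = 1 \<or> c = -1)}"

definition S0 :: "nat \<Rightarrow> nat \<Rightarrow> elem set" where
  "S0 r s = {(ea i 1, \<lambda>_. False, \<lambda>_. 0) | i. i < r}
     \<union> {(\<lambda>_. 0, \<lambda>j. j = i, \<lambda>_. 0) | i. i < r}
     \<union> {(\<lambda>_. 0, \<lambda>_. False, ea i 1) | i. i < s}"

lemma nrm_mult: "nrm r s (x \<otimes>\<^bsub>GZ r s\<^esub> y) \<le> nrm r s x + nrm r s y"
proof -
  obtain a t z where x: "x = (a,t,z)" by (cases x)
  obtain b u w where y: "y = (b,u,w)" by (cases y)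
  have 1: "(\<Sum>i<r. nat \<bar>a i + (if t i then - b i else b i)\<bar>) \<le> (\<Sum>i<r. nat \<bar>a i\<bar>) + (\<Sum>i<r. nat \<bar>b i\<bar>)"
    unfolding sum.distrib[symmetric] by (rule sum_mono) auto
  have 2: "(\<Sum>i<s. nat \<bar>z i + w i\<bar>) \<le> (\<Sum>i<s. nat \<bar>z i\<bar>) + (\<Sum>i<s. nat \<bar>w i\<bar>)"
    unfolding sum.distrib[symmetric] by (rule sum_mono) auto
  show ?thesis using 1 2 by (simp add: x y nrm_def GZ_mult)
qed

lemma nrm_one: "nrm r s \<one>\<^bsub>GZ r s\<^esub> = 0"
  by (simp add: nrm_def GZ_one)

lemma Estd_carrier: "Estd r s \<subseteq> carrier (GZ r s)"
  by (auto simp: Estd_def GZ_carrier ea_def)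

lemma S0_carrier: "S0 r s \<subseteq> carrier (GZ r s)"
  by (auto simp: S0_def GZ_carrier ea_def)

lemma finite_Estd: "finite (Estd r s)"
proof -
  have e1: "{(ea i c, \<lambda>_. False, \<lambda>_. 0) | i c. i < r \<and> (c = 1 \<or> c = -1)} =
     (\<lambda>(i,c). (ea i c, \<lambda>_. False, \<lambda>_. 0)) ` ({..<r} \<times> {1, -1})" by auto
  have e2: "{(\<lambda>_. 0, \<lambda>_. False, ea i c) | i c. i < s \<and> (c = 1 \<or> c = -1)} =
     (\<lambda>(i,c). (\<lambda>_. 0, \<lambda>_. False, ea i c)) ` ({..<s} \<times> {1, -1})" by auto
  have e3: "{(\<lambda>_. 0, \<lambda>j. j = i, \<lambda>_. 0) | i. i < r} = (\<lambda>i. ((\<lambda>_. 0, \<lambda>j. j = i, \<lambda>_. 0)::elem)) ` {..<r}"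
    by auto
  show ?thesis unfolding Estd_def e1 e2 e3 by simp
qed

lemma finite_S0: "finite (S0 r s)"
proof -
  have "S0 r s = (\<lambda>i. (ea i 1, \<lambda>_. False, \<lambda>_. 0)) ` {..<r} \<union> (\<lambda>i. ((\<lambda>_. 0, \<lambda>j. j = i, \<lambda>_. 0)::elem)) ` {..<r}
     \<union> (\<lambda>i. (\<lambda>_. 0, \<lambda>_. False, ea i 1)) ` {..<s}" unfolding S0_def by auto
  then show ?thesis by simp
qed

lemma Estd_S0: "Estd r s \<subseteq> S0 r s \<union> m_inv (GZ r s) ` S0 r s"
proof
  fix x assume "x \<in> Estd r s"
  then consider (A) i c where "i < r" "c = 1 \<or> c = -1" "x = (ea i c, \<lambda>_. False, \<lambda>_. 0)"
    | (T) i where "i < r" "x = (\<lambda>_. 0, \<lambda>j. j = i, \<lambda>_. 0)"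
    | (Z) i c where "i < s" "c = 1 \<or> c = -1" "x = (\<lambda>_. 0, \<lambda>_. False, ea i c)"
    unfolding Estd_def by blast
  then show "x \<in> S0 r s \<union> m_inv (GZ r s) ` S0 r s"
  proof cases
    case (A i c)
    have m: "(ea i 1, \<lambda>_. False, \<lambda>_. 0) \<in> S0 r s" using A unfolding S0_def by blast
    have "inv\<^bsub>GZ r s\<^esub> (ea i 1, \<lambda>_. False, \<lambda>_. 0) = (ea i (-1), \<lambda>_. False, \<lambda>_. 0)"
      using S0_carrier m by (subst GZ_inv) (auto simp: ea_def fun_eq_iff)
    then show ?thesis using A m by (metis UnI1 UnI2 image_eqI)
  next
    case (T i)
    then show ?thesis unfolding S0_def by blast
  next
    case (Z i c)
    have m: "(\<lambda>_. 0, \<lambda>_. False, ea i 1) \<in> S0 r s" using Z unfolding S0_def by blast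
    have "inv\<^bsub>GZ r s\<^esub> (\<lambda>_. 0, \<lambda>_. False, ea i 1) = (\<lambda>_. 0, \<lambda>_. False, ea i (-1))"
      using S0_carrier m by (subst GZ_inv) (auto simp: ea_def fun_eq_iff)
    then show ?thesis using Z m by (metis UnI1 UnI2 image_eqI)
  qed
qed

lemma nsum_upd: fixes a :: "nat \<Rightarrow> int" and r :: nat assumes "i < r"
  shows "(\<Sum>k<r. nat \<bar>(a(i := v)) k\<bar>) + nat \<bar>a i\<bar> = (\<Sum>k<r. nat \<bar>a k\<bar>) + nat \<bar>v\<bar>"
proof -
  have "(\<Sum>k<r. nat \<bar>(a(i := v)) k\<bar>) = nat \<bar>v\<bar> + (\<Sum>k\<in>{..<r} - {i}. nat \<bar>(a(i := v)) k\<bar>)"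
    using assms sum.remove[OF finite_lessThan[of r], of i "\<lambda>k. nat \<bar>(a(i := v)) k\<bar>"] by simp
  also have "(\<Sum>k\<in>{..<r} - {i}. nat \<bar>(a(i := v)) k\<bar>) = (\<Sum>k\<in>{..<r} - {i}. nat \<bar>a k\<bar>)"
    by (rule sum.cong) auto
  also have "(\<Sum>k<r. nat \<bar>a k\<bar>) = nat \<bar>a i\<bar> + (\<Sum>k\<in>{..<r} - {i}. nat \<bar>a k\<bar>)"
    using assms sum.remove[OF finite_lessThan[of r], of i "\<lambda>k. nat \<bar>a k\<bar>"] by simp
  ultimately show ?thesis by simp
qed

lemma mu_zero: assumes "g \<in> carrier (GZ r s)" "mu r s g = 0" shows "g = \<one>\<^bsub>GZ r s\<^esub>"
proof -
  obtain a t z where g: "g = (a,t,z)" by (cases g)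
  have c: "(\<forall>i\<ge>r. a i = 0 \<and> \<not> t i) \<and> (\<forall>i\<ge>s. z i = 0)" using assms(1) g by (simp add: GZ_carrier)
  have "(\<Sum>i<r. nat \<bar>a i\<bar>) = 0" "(\<Sum>i<s. nat \<bar>z i\<bar>) = 0" "card {i. i < r \<and> t i} = 0"
    using assms(2) g by (auto simp: mu_def nrm_def)
  then have "\<forall>i<r. a i = 0" "\<forall>i<s. z i = 0" "\<forall>i<r. \<not> t i" by auto
  then have "a = (\<lambda>_. 0)" "z = (\<lambda>_. 0)" "t = (\<lambda>_. False)" using c by (auto simp: fun_eq_iff) (meson not_le)+
  then show ?thesis using g by (simp add: GZ_one)
qed

lemma decomp: assumes "g \<in> carrier (GZ r s)" "mu r s g = Suc n"
  shows "\<exists>x\<in>Estd r s. \<exists>g'\<in>carrier (GZ r s). g = x \<otimes>\<^bsub>GZ r s\<^esub> g' \<and> mu r s g' = n"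
proof -
  obtain a t z where g: "g = (a,t,z)" by (cases g)
  have c: "(\<forall>i\<ge>r. a i = 0 \<and> \<not> t i) \<and> (\<forall>i\<ge>s. z i = 0)" using assms(1) g by (simp add: GZ_carrier)
  show ?thesis
  proof (cases "\<exists>i<r. a i \<noteq> 0")
    case True
    then obtain i where i: "i < r" "a i \<noteq> 0" by blast
    define c where "c = sgn (a i)"
    define g' where "g' = (a(i := a i - c), t, z)"
    have x: "(ea i c, \<lambda>_. False, \<lambda>_. 0) \<in> Estd r s" using i unfolding Estd_def c_def
      by (auto simp: sgn_if)
    have g'c: "g' \<in> carrier (GZ r s)" using c i unfolding g'_def by (auto simp: GZ_carrier)
    have eq: "g = (ea i c, \<lambda>_. False, \<lambda>_. 0) \<otimes>\<^bsub>GZ r s\<^esub> g'"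
      unfolding g g'_def by (simp add: GZ_mult ea_def fun_eq_iff)
    have v: "nat \<bar>a i - c\<bar> + 1 = nat \<bar>a i\<bar>" using i(2) unfolding c_def by (auto simp: sgn_if)
    have "(\<Sum>k<r. nat \<bar>(a(i := a i - c)) k\<bar>) + nat \<bar>a i\<bar> = (\<Sum>k<r. nat \<bar>a k\<bar>) + nat \<bar>a i - c\<bar>"
      by (rule nsum_upd[OF i(1)])
    then have "mu r s g' + 1 = mu r s g" using v unfolding g g'_def mu_def nrm_def by simp
    then show ?thesis using x g'c eq assms(2) by auto
  next
    case F1: False
    show ?thesis
    proof (cases "\<exists>i<s. z i \<noteq> 0")
      case True
      then obtain i where i: "i < s" "z i \<noteq> 0" by blast
      define c where "c = sgn (z i)"
      define g' where "g' = (a, t, z(i := z i - c))"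
      have x: "(\<lambda>_. 0, \<lambda>_. False, ea i c) \<in> Estd r s" using i unfolding Estd_def c_def
        by (auto simp: sgn_if)
      have g'c: "g' \<in> carrier (GZ r s)" using c i unfolding g'_def by (auto simp: GZ_carrier)
      have eq: "g = (\<lambda>_. 0, \<lambda>_. False, ea i c) \<otimes>\<^bsub>GZ r s\<^esub> g'"
        unfolding g g'_def by (simp add: GZ_mult ea_def fun_eq_iff)
      have v: "nat \<bar>z i - c\<bar> + 1 = nat \<bar>z i\<bar>" using i(2) unfolding c_def by (auto simp: sgn_if)
      have "(\<Sum>k<s. nat \<bar>(z(i := z i - c)) k\<bar>) + nat \<bar>z i\<bar> = (\<Sum>k<s. nat \<bar>z k\<bar>) + nat \<bar>z i - c\<bar>"
        by (rule nsum_upd[OF i(1)])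
      then have "mu r s g' + 1 = mu r s g" using v unfolding g g'_def mu_def nrm_def by simp
      then show ?thesis using x g'c eq assms(2) by auto
    next
      case F2: False
      have a0: "a = (\<lambda>_. 0)" using F1 c by (auto simp: fun_eq_iff) (meson not_le)
      have z0: "z = (\<lambda>_. 0)" using F2 c by (auto simp: fun_eq_iff) (meson not_le)
      have "nrm r s g = 0" using a0 z0 g by (simp add: nrm_def)
      then have cd: "card {i. i < r \<and> t i} = Suc n" using assms(2) g by (simp add: mu_def)
      then obtain i where i: "i < r" "t i" by (metis (mono_tags, lifting) Collect_empty_eq card.empty nat.distinct(1))
      define g' where "g' = (a, t(i := False), z)"
      have x: "(\<lambda>_. 0, \<lambda>j. j = i, \<lambda>_. 0) \<in> Estd r s" using i unfolding Estd_def by blast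
      have g'c: "g' \<in> carrier (GZ r s)" using c i unfolding g'_def by (auto simp: GZ_carrier)
      have eq: "g = (\<lambda>_. 0, \<lambda>j. j = i, \<lambda>_. 0) \<otimes>\<^bsub>GZ r s\<^esub> g'"
        unfolding g g'_def using a0 z0 i by (auto simp: GZ_mult fun_eq_iff)
      have "{j. j < r \<and> (t(i := False)) j} = {j. j < r \<and> t j} - {i}" by auto
      then have "card {j. j < r \<and> (t(i := False)) j} = n" using cd i by (simp add: card_Diff_singleton)
      then have "mu r s g' = n" using a0 z0 unfolding g'_def mu_def nrm_def by simp
      then show ?thesis using x g'c eq by auto
    qed
  qed
qed

lemma carrier_induct: assumes "g \<in> carrier (GZ r s)" "P \<one>\<^bsub>GZ r s\<^esub>"
  "\<And>x g'. x \<in> Estd r s \<Longrightarrow> g' \<in> carrier (GZ r s) \<Longrightarrow> P g' \<Longrightarrow> P (x \<otimes>\<^bsub>GZ r s\<^esub> g')"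
  shows "P g"
proof -
  have "\<forall>g. g \<in> carrier (GZ r s) \<longrightarrow> mu r s g = n \<longrightarrow> P g" for n
  proof (induction n)
    case 0 then show ?case using mu_zero assms(2) by blast
  next
    case (Suc n) then show ?case using decomp assms(3) by metis
  qed
  then show ?thesis using assms(1) by blast
qed

lemma generate_S0: "generate (GZ r s) (S0 r s) = carrier (GZ r s)"
proof
  interpret group "GZ r s" by (rule GZ_group)
  show "generate (GZ r s) (S0 r s) \<subseteq> carrier (GZ r s)" by (rule generate_incl[OF S0_carrier])
  show "carrier (GZ r s) \<subseteq> generate (GZ r s) (S0 r s)"
  proof
    fix g assume "g \<in> carrier (GZ r s)"
    then show "g \<in> generate (GZ r s) (S0 r s)"
    proof (rule carrier_induct)
      show "\<one>\<^bsub>GZ r s\<^esub> \<in> generate (GZ r s) (S0 r s)" by (rule generate.one)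
      fix x g' assume "x \<in> Estd r s" "g' \<in> generate (GZ r s) (S0 r s)"
      moreover have "x \<in> generate (GZ r s) (S0 r s)" using Estd_S0[of r s] calculation(1)
        by (auto intro: generate.incl generate.inv)
      ultimately show "x \<otimes>\<^bsub>GZ r s\<^esub> g' \<in> generate (GZ r s) (S0 r s)" by (auto intro: generate.eng)
    qed
  qed
qed

lemma gen_set_S0: "gen_set (GZ r s) (S0 r s)"
  unfolding gen_set_def using finite_S0 S0_carrier generate_S0 by blast

lemma mu_le: "mu r s g \<le> nrm r s g + r"
proof -
  have "card {i. i < r \<and> fst (snd g) i} \<le> card {..<r}" by (rule card_mono) auto
  then show ?thesis unfolding mu_def by simp
qed

lemma wordlen_upper: assumes "gen_set (GZ r s) S"
  shows "\<exists>L. \<forall>g\<in>carrier (GZ r s). wordlen (GZ r s) S g \<le> L * (nrm r s g + r)"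
proof -
  interpret group "GZ r s" by (rule GZ_group)
  have S: "S \<subseteq> carrier (GZ r s)" "generate (GZ r s) S = carrier (GZ r s)" using assms unfolding gen_set_def by auto
  define L where "L = Max (insert 0 (wordlen (GZ r s) S ` Estd r s))"
  have L: "wordlen (GZ r s) S x \<le> L" if "x \<in> Estd r s" for x
    unfolding L_def using finite_Estd that by (intro Max_ge) auto
  have "wordlen (GZ r s) S g \<le> L * mu r s g" if "g \<in> carrier (GZ r s)" for g
  proof -
    have "\<forall>g. g \<in> carrier (GZ r s) \<longrightarrow> mu r s g = n \<longrightarrow> wordlen (GZ r s) S g \<le> L * n" for n
    proof (induction n)
      case 0 then show ?case using mu_zero wordlen_one by fastforce
    next
      case (Suc n)
      show ?case
      proof (intro allI impI)
        fix g assume g: "g \<in> carrier (GZ r s)" "mu r s g = Suc n"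
        obtain x g' where xg: "x \<in> Estd r s" "g' \<in> carrier (GZ r s)" "g = x \<otimes>\<^bsub>GZ r s\<^esub> g'" "mu r s g' = n"
          using decomp[OF g] by blast
        have "wordlen (GZ r s) S g \<le> wordlen (GZ r s) S x + wordlen (GZ r s) S g'"
          using xg Estd_carrier by (auto intro: wordlen_mult[OF S])
        also have "\<dots> \<le> L + L * n"
        proof -
          have "wordlen (GZ r s) S g' \<le> L * n" using Suc.IH xg(2,4) by blast
          then show ?thesis using L[OF xg(1)] by linarith
        qed
        finally show "wordlen (GZ r s) S g \<le> L * Suc n" by simp
      qed
    qed
    then show ?thesis using that by blast
  qed
  moreover have "L * mu r s g \<le> L * (nrm r s g + r)" for g using mu_le by simp
  ultimately show ?thesis by (meson order_trans)
qed

lemma wordlen_lower: assumes "gen_set (GZ r s) S"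
  shows "\<exists>C. \<forall>g\<in>carrier (GZ r s). nrm r s g \<le> C * wordlen (GZ r s) S g"
proof -
  interpret group "GZ r s" by (rule GZ_group)
  have S: "S \<subseteq> carrier (GZ r s)" "generate (GZ r s) S = carrier (GZ r s)" "finite S"
    using assms unfolding gen_set_def by auto
  define C where "C = Max (insert 0 (nrm r s ` (S \<union> m_inv (GZ r s) ` S)))"
  have C: "nrm r s x \<le> C" if "x \<in> S \<union> m_inv (GZ r s) ` S" for x
    unfolding C_def using S(3) that by (intro Max_ge) auto
  show ?thesis
  proof (intro exI ballI)
    fix g assume g: "g \<in> carrier (GZ r s)"
    obtain n where "hasw (GZ r s) S n g" using gen_hasw S g by blast
    then have h: "hasw (GZ r s) S (wordlen (GZ r s) S g) g" by (rule wordlen_ex)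
    show "nrm r s g \<le> C * wordlen (GZ r s) S g"
      by (rule hasw_bound[of S "nrm r s" C, OF S(1) C nrm_mult nrm_one h])
  qed
qed



definition Agen :: "nat \<Rightarrow> elem" where "Agen i = (ea i 1, \<lambda>_. False, \<lambda>_. 0)"
definition Tgen :: "nat \<Rightarrow> elem" where "Tgen i = (\<lambda>_. 0, \<lambda>j. j = i, \<lambda>_. 0)"
definition Zgen :: elem where "Zgen = (\<lambda>_. 0, \<lambda>_. False, ea 0 1)"
definition Tall :: "nat \<Rightarrow> elem" where "Tall r = (\<lambda>_. 0, \<lambda>j. j < r, \<lambda>_. 0)"
definition tst :: "(nat \<Rightarrow> int) \<Rightarrow> int \<Rightarrow> elem" where "tst a k = (a, \<lambda>_. False, ea 0 k)"

lemma iso_group_hom: "\<phi> \<in> iso (GZ r s) (GZ r s) \<Longrightarrow> group_hom (GZ r s) (GZ r s) \<phi>"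
  unfolding group_hom_def group_hom_axioms_def using GZ_group iso_imp_homomorphism by blast

lemma conjF: assumes "(c,u,v) \<in> carrier (GZ r s)"
  shows "(c,u,v) \<otimes>\<^bsub>GZ r s\<^esub> (a,\<lambda>_. False,z) \<otimes>\<^bsub>GZ r s\<^esub> inv\<^bsub>GZ r s\<^esub> (c,u,v) =
     ((\<lambda>j. if u j then - a j else a j), \<lambda>_. False, z)"
  using assms by (simp add: GZ_inv GZ_mult fun_eq_iff)

lemma powF: "(b, \<lambda>_. False, w) [^]\<^bsub>GZ r s\<^esub> (n::nat) = ((\<lambda>j. int n * b j), \<lambda>_. False, (\<lambda>j. int n * w j))"
  by (induction n) (auto simp: GZ_mult GZ_one fun_eq_iff algebra_simps)

definition Pc :: "nat \<Rightarrow> nat \<Rightarrow> elem \<Rightarrow> bool" where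
  "Pc r s x = (\<forall>h\<in>carrier (GZ r s). x \<otimes>\<^bsub>GZ r s\<^esub> (h \<otimes>\<^bsub>GZ r s\<^esub> x \<otimes>\<^bsub>GZ r s\<^esub> inv\<^bsub>GZ r s\<^esub> h) =
        (h \<otimes>\<^bsub>GZ r s\<^esub> x \<otimes>\<^bsub>GZ r s\<^esub> inv\<^bsub>GZ r s\<^esub> h) \<otimes>\<^bsub>GZ r s\<^esub> x)"

definition Qc :: "nat \<Rightarrow> nat \<Rightarrow> elem \<Rightarrow> bool" where
  "Qc r s x = (\<forall>h\<in>carrier (GZ r s). x \<otimes>\<^bsub>GZ r s\<^esub> h = h \<otimes>\<^bsub>GZ r s\<^esub> x)"

lemma Pc_F: assumes "(a, \<lambda>_. False, z) \<in> carrier (GZ r s)" shows "Pc r s (a, \<lambda>_. False, z)"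
  unfolding Pc_def
proof
  fix h assume h: "h \<in> carrier (GZ r s)"
  obtain c u v where hh: "h = (c,u,v)" by (cases h)
  show "(a, \<lambda>_. False, z) \<otimes>\<^bsub>GZ r s\<^esub> (h \<otimes>\<^bsub>GZ r s\<^esub> (a, \<lambda>_. False, z) \<otimes>\<^bsub>GZ r s\<^esub> inv\<^bsub>GZ r s\<^esub> h) =
      h \<otimes>\<^bsub>GZ r s\<^esub> (a, \<lambda>_. False, z) \<otimes>\<^bsub>GZ r s\<^esub> inv\<^bsub>GZ r s\<^esub> h \<otimes>\<^bsub>GZ r s\<^esub> (a, \<lambda>_. False, z)"
  proof -
    have e: "h \<otimes>\<^bsub>GZ r s\<^esub> (a, \<lambda>_. False, z) \<otimes>\<^bsub>GZ r s\<^esub> inv\<^bsub>GZ r s\<^esub> h = ((\<lambda>j. if u j then - a j else a j), \<lambda>_. False, z)"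
      unfolding hh by (rule conjF) (use h hh in simp)
    show ?thesis unfolding e by (simp add: GZ_mult fun_eq_iff)
  qed
qed

lemma Pc_t: assumes "x \<in> carrier (GZ r s)" "Pc r s x" shows "fst (snd x) = (\<lambda>_. False)"
proof (rule ccontr)
  obtain b u w where x: "x = (b,u,w)" by (cases x)
  assume "fst (snd x) \<noteq> (\<lambda>_. False)"
  then obtain j where j: "u j" using x by auto
  have jr: "j < r"
  proof (rule ccontr)
    assume "\<not> j < r"
    then have "\<not> u j" using assms(1) unfolding x GZ_carrier by simp
    then show False using j by simp
  qed
  have hc: "Agen j \<in> carrier (GZ r s)" using jr by (simp add: Agen_def GZ_carrier ea_def)
  have iA: "inv\<^bsub>GZ r s\<^esub> Agen j = ((\<lambda>i. - ea j 1 i), \<lambda>_. False, \<lambda>_. 0)"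
    using hc unfolding Agen_def by (simp add: GZ_inv)
  have "Agen j \<otimes>\<^bsub>GZ r s\<^esub> x = ((\<lambda>i. ea j 1 i + b i), u, w)"
    unfolding x Agen_def by (simp add: GZ_mult)
  then have e: "Agen j \<otimes>\<^bsub>GZ r s\<^esub> x \<otimes>\<^bsub>GZ r s\<^esub> inv\<^bsub>GZ r s\<^esub> Agen j = ((\<lambda>i. b i + 2 * ea j 1 i), u, w)"
    unfolding iA using j by (simp add: GZ_mult fun_eq_iff ea_def)
  have "x \<otimes>\<^bsub>GZ r s\<^esub> (Agen j \<otimes>\<^bsub>GZ r s\<^esub> x \<otimes>\<^bsub>GZ r s\<^esub> inv\<^bsub>GZ r s\<^esub> Agen j) =
     (Agen j \<otimes>\<^bsub>GZ r s\<^esub> x \<otimes>\<^bsub>GZ r s\<^esub> inv\<^bsub>GZ r s\<^esub> Agen j) \<otimes>\<^bsub>GZ r s\<^esub> x"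
    using assms(2) hc unfolding Pc_def by blast
  then have "x \<otimes>\<^bsub>GZ r s\<^esub> ((\<lambda>i. b i + 2 * ea j 1 i), u, w) = ((\<lambda>i. b i + 2 * ea j 1 i), u, w) \<otimes>\<^bsub>GZ r s\<^esub> x"
    unfolding e .
  then have "fst (x \<otimes>\<^bsub>GZ r s\<^esub> ((\<lambda>i. b i + 2 * ea j 1 i), u, w)) j = fst (((\<lambda>i. b i + 2 * ea j 1 i), u, w) \<otimes>\<^bsub>GZ r s\<^esub> x) j"
    by (rule arg_cong)
  then show False using j unfolding x by (simp add: GZ_mult ea_def)
qed

lemma Pc_iso: assumes "\<phi> \<in> iso (GZ r s) (GZ r s)" "x \<in> carrier (GZ r s)" "Pc r s x"
  shows "Pc r s (\<phi> x)"
  unfolding Pc_def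
proof
  interpret h: group_hom "GZ r s" "GZ r s" \<phi> by (rule iso_group_hom[OF assms(1)])
  fix h assume h: "h \<in> carrier (GZ r s)"
  then obtain h' where h': "h' \<in> carrier (GZ r s)" "h = \<phi> h'" using assms(1) unfolding iso_iff by blast
  have "x \<otimes>\<^bsub>GZ r s\<^esub> (h' \<otimes>\<^bsub>GZ r s\<^esub> x \<otimes>\<^bsub>GZ r s\<^esub> inv\<^bsub>GZ r s\<^esub> h') =
        (h' \<otimes>\<^bsub>GZ r s\<^esub> x \<otimes>\<^bsub>GZ r s\<^esub> inv\<^bsub>GZ r s\<^esub> h') \<otimes>\<^bsub>GZ r s\<^esub> x" using assms(3) h' unfolding Pc_def by blast
  then have "\<phi> (x \<otimes>\<^bsub>GZ r s\<^esub> (h' \<otimes>\<^bsub>GZ r s\<^esub> x \<otimes>\<^bsub>GZ r s\<^esub> inv\<^bsub>GZ r s\<^esub> h')) =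
        \<phi> ((h' \<otimes>\<^bsub>GZ r s\<^esub> x \<otimes>\<^bsub>GZ r s\<^esub> inv\<^bsub>GZ r s\<^esub> h') \<otimes>\<^bsub>GZ r s\<^esub> x)" by simp
  then show "\<phi> x \<otimes>\<^bsub>GZ r s\<^esub> (h \<otimes>\<^bsub>GZ r s\<^esub> \<phi> x \<otimes>\<^bsub>GZ r s\<^esub> inv\<^bsub>GZ r s\<^esub> h) =
      h \<otimes>\<^bsub>GZ r s\<^esub> \<phi> x \<otimes>\<^bsub>GZ r s\<^esub> inv\<^bsub>GZ r s\<^esub> h \<otimes>\<^bsub>GZ r s\<^esub> \<phi> x"
    using h' assms(2) by simp
qed

lemma Qc_iso: assumes "\<phi> \<in> iso (GZ r s) (GZ r s)" "x \<in> carrier (GZ r s)" "Qc r s x"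
  shows "Qc r s (\<phi> x)"
  unfolding Qc_def
proof
  interpret h: group_hom "GZ r s" "GZ r s" \<phi> by (rule iso_group_hom[OF assms(1)])
  fix h assume h: "h \<in> carrier (GZ r s)"
  then obtain h' where h': "h' \<in> carrier (GZ r s)" "h = \<phi> h'" using assms(1) unfolding iso_iff by blast
  have "x \<otimes>\<^bsub>GZ r s\<^esub> h' = h' \<otimes>\<^bsub>GZ r s\<^esub> x" using assms(3) h' unfolding Qc_def by blast
  then have "\<phi> (x \<otimes>\<^bsub>GZ r s\<^esub> h') = \<phi> (h' \<otimes>\<^bsub>GZ r s\<^esub> x)" by simp
  then show "\<phi> x \<otimes>\<^bsub>GZ r s\<^esub> h = h \<otimes>\<^bsub>GZ r s\<^esub> \<phi> x" using h' assms(2) by simp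
qed

lemma Qc_form: assumes "x \<in> carrier (GZ r s)" "Qc r s x" shows "fst x = (\<lambda>_. 0) \<and> fst (snd x) = (\<lambda>_. False)"
proof -
  obtain c u v where x: "x = (c,u,v)" by (cases x)
  have "c j = 0 \<and> \<not> u j" for j
  proof (cases "j < r")
    case True
    have a: "Agen j \<in> carrier (GZ r s)" "Tgen j \<in> carrier (GZ r s)" using True
      by (auto simp: Agen_def Tgen_def GZ_carrier ea_def)
    have "x \<otimes>\<^bsub>GZ r s\<^esub> Agen j = Agen j \<otimes>\<^bsub>GZ r s\<^esub> x" "x \<otimes>\<^bsub>GZ r s\<^esub> Tgen j = Tgen j \<otimes>\<^bsub>GZ r s\<^esub> x"
      using assms(2) a unfolding Qc_def by auto
    then have "fst (x \<otimes>\<^bsub>GZ r s\<^esub> Agen j) j = fst (Agen j \<otimes>\<^bsub>GZ r s\<^esub> x) j"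
       "fst (x \<otimes>\<^bsub>GZ r s\<^esub> Tgen j) j = fst (Tgen j \<otimes>\<^bsub>GZ r s\<^esub> x) j" by simp_all
    then show ?thesis unfolding x Agen_def Tgen_def by (auto simp: GZ_mult ea_def split: if_splits)
  next
    case False
    then show ?thesis using assms(1) x by (auto simp: GZ_carrier)
  qed
  then show ?thesis using x by (auto simp: fun_eq_iff)
qed

lemma Qc_Zgen: "Qc r s (\<lambda>_. 0, \<lambda>_. False, w)"
  unfolding Qc_def by (auto simp: GZ_mult fun_eq_iff add.commute)



lemma rel_TA: assumes "k < r" "i < r"
  shows "Tgen k \<otimes>\<^bsub>GZ r s\<^esub> Agen i = (if k = i then inv\<^bsub>GZ r s\<^esub> Agen i else Agen i) \<otimes>\<^bsub>GZ r s\<^esub> Tgen k"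
proof -
  have c: "Agen i \<in> carrier (GZ r s)" using assms by (simp add: Agen_def GZ_carrier ea_def)
  show ?thesis
  proof (cases "k = i")
    case True
    then show ?thesis using c unfolding Agen_def Tgen_def by (simp add: GZ_inv GZ_mult fun_eq_iff ea_def)
  next
    case False
    then show ?thesis unfolding Agen_def Tgen_def by (simp add: GZ_mult fun_eq_iff ea_def)
  qed
qed

lemma rig_A:
  assumes phi: "\<phi> \<in> iso (GZ r s) (GZ r s)" and i: "i < r"
    and g1: "tst a k \<in> carrier (GZ r s)" and g2: "tst a' k' \<in> carrier (GZ r s)"
    and eq: "\<phi> (tst a k) = tst a' k'" and pos: "a i > 0"
  shows "\<exists>j<r. fst (\<phi> (Agen i)) j \<noteq> 0 \<and> fst (snd (\<phi> (Tgen i))) j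
            \<and> (\<forall>l<r. l \<noteq> i \<longrightarrow> \<not> fst (snd (\<phi> (Tgen l))) j) \<and> a' j = a i * fst (\<phi> (Agen i)) j"
proof -
  interpret h: group_hom "GZ r s" "GZ r s" \<phi> by (rule iso_group_hom[OF phi])
  have Ac: "Agen i \<in> carrier (GZ r s)" using i by (simp add: Agen_def GZ_carrier ea_def)
  have Tc: "Tgen l \<in> carrier (GZ r s)" if "l < r" for l using that by (simp add: Tgen_def GZ_carrier)
  have xAc: "\<phi> (Agen i) \<in> carrier (GZ r s)" using Ac by simp
  have "Pc r s (\<phi> (Agen i))" using Pc_iso[OF phi Ac] Pc_F Ac unfolding Agen_def by blast
  then have "fst (snd (\<phi> (Agen i))) = (\<lambda>_. False)" using Pc_t xAc by blast
  then obtain b w where xA: "\<phi> (Agen i) = (b, \<lambda>_. False, w)" by (metis prod.collapse)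
  have ixA: "inv\<^bsub>GZ r s\<^esub> (b, \<lambda>_. False, w) = ((\<lambda>j. - b j), \<lambda>_. False, (\<lambda>j. - w j))"
    using xAc unfolding xA by (simp add: GZ_inv)
  have relphi: "\<phi> (Tgen l) \<otimes>\<^bsub>GZ r s\<^esub> \<phi> (Agen i) =
      (if l = i then inv\<^bsub>GZ r s\<^esub> \<phi> (Agen i) else \<phi> (Agen i)) \<otimes>\<^bsub>GZ r s\<^esub> \<phi> (Tgen l)" if l: "l < r" for l
  proof -
    have "\<phi> (Tgen l \<otimes>\<^bsub>GZ r s\<^esub> Agen i) = \<phi> ((if l = i then inv\<^bsub>GZ r s\<^esub> Agen i else Agen i) \<otimes>\<^bsub>GZ r s\<^esub> Tgen l)"
      using rel_TA[OF l i] by simp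
    then show ?thesis using Ac Tc[OF l] by (cases "l = i") auto
  qed
  have cond: "(\<forall>j. b j \<noteq> 0 \<longrightarrow> fst (snd (\<phi> (Tgen i))) j) \<and> w = (\<lambda>_. 0)"
  proof -
    obtain c u v where tau: "\<phi> (Tgen i) = (c,u,v)" by (cases "\<phi> (Tgen i)")
    have "\<phi> (Tgen i) \<otimes>\<^bsub>GZ r s\<^esub> \<phi> (Agen i) = inv\<^bsub>GZ r s\<^esub> \<phi> (Agen i) \<otimes>\<^bsub>GZ r s\<^esub> \<phi> (Tgen i)"
      using relphi[OF i] by simp
    then have e: "(c,u,v) \<otimes>\<^bsub>GZ r s\<^esub> (b, \<lambda>_. False, w) = ((\<lambda>j. - b j), \<lambda>_. False, (\<lambda>j. - w j)) \<otimes>\<^bsub>GZ r s\<^esub> (c,u,v)"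
      unfolding tau xA ixA .
    then have "\<forall>j. c j + (if u j then - b j else b j) = - b j + c j" "\<forall>j. v j + w j = - w j + v j"
      by (simp_all add: GZ_mult fun_eq_iff)
    then show ?thesis unfolding tau by (auto simp: fun_eq_iff split: if_splits)
  qed
  then have w0: "w = (\<lambda>_. 0)" by simp
  have cond2: "\<not> fst (snd (\<phi> (Tgen l))) j" if "l < r" "l \<noteq> i" "b j \<noteq> 0" for l j
  proof -
    obtain c u v where tau: "\<phi> (Tgen l) = (c,u,v)" by (cases "\<phi> (Tgen l)")
    have "\<phi> (Tgen l) \<otimes>\<^bsub>GZ r s\<^esub> \<phi> (Agen i) = \<phi> (Agen i) \<otimes>\<^bsub>GZ r s\<^esub> \<phi> (Tgen l)"
      using relphi[OF that(1)] that(2) by simp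
    then have e: "(c,u,v) \<otimes>\<^bsub>GZ r s\<^esub> (b, \<lambda>_. False, w) = (b, \<lambda>_. False, w) \<otimes>\<^bsub>GZ r s\<^esub> (c,u,v)"
      unfolding tau xA .
    then have "c j + (if u j then - b j else b j) = b j + c j"
      by (simp add: GZ_mult fun_eq_iff)
    then show ?thesis unfolding tau using that(3) by (auto split: if_splits)
  qed
  have bnz: "\<exists>j. b j \<noteq> 0"
  proof (rule ccontr)
    assume "\<not> (\<exists>j. b j \<noteq> 0)"
    then have "\<phi> (Agen i) = \<one>\<^bsub>GZ r s\<^esub>" unfolding xA w0 GZ_one by (auto simp: fun_eq_iff)
    also have "\<dots> = \<phi> \<one>\<^bsub>GZ r s\<^esub>" by simp
    finally have "Agen i = \<one>\<^bsub>GZ r s\<^esub>" using phi Ac unfolding iso_iff inj_on_def by blast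
    then have "fst (Agen i) i = fst (\<one>\<^bsub>GZ r s\<^esub>) i" by simp
    then show False unfolding Agen_def GZ_one by (simp add: ea_def)
  qed
  then obtain j where j: "b j \<noteq> 0" by blast
  have jr: "j < r"
  proof (rule ccontr)
    assume "\<not> j < r"
    then have "b j = 0" using xAc unfolding xA GZ_carrier by simp
    then show False using j by simp
  qed
  have uj: "fst (snd (\<phi> (Tgen i))) j" using cond j by blast
  define m where "m = nat (2 * a i)"
  have Ti: "Tgen i \<in> carrier (GZ r s)" by (rule Tc[OF i])
  have cj1: "Tgen i \<otimes>\<^bsub>GZ r s\<^esub> tst a k \<otimes>\<^bsub>GZ r s\<^esub> inv\<^bsub>GZ r s\<^esub> Tgen i = ((\<lambda>j. if j = i then - a j else a j), \<lambda>_. False, ea 0 k)"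
    unfolding tst_def Tgen_def by (rule conjF) (use Ti in \<open>simp add: Tgen_def\<close>)
  have X: "tst a k \<otimes>\<^bsub>GZ r s\<^esub> inv\<^bsub>GZ r s\<^esub> (Tgen i \<otimes>\<^bsub>GZ r s\<^esub> tst a k \<otimes>\<^bsub>GZ r s\<^esub> inv\<^bsub>GZ r s\<^esub> Tgen i) = Agen i [^]\<^bsub>GZ r s\<^esub> m"
  proof -
    have cc: "((\<lambda>j. if j = i then - a j else a j), \<lambda>_. False, ea 0 k) \<in> carrier (GZ r s)"
      using g1 i unfolding tst_def GZ_carrier by auto
    show ?thesis unfolding cj1 Agen_def powF using cc pos
      by (simp add: GZ_inv GZ_mult tst_def fun_eq_iff m_def ea_def)
  qed
  obtain c u v where tau: "\<phi> (Tgen i) = (c,u,v)" by (cases "\<phi> (Tgen i)")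
  have tauc: "(c,u,v) \<in> carrier (GZ r s)" using Ti tau h.hom_closed by metis
  have cj2: "(c,u,v) \<otimes>\<^bsub>GZ r s\<^esub> tst a' k' \<otimes>\<^bsub>GZ r s\<^esub> inv\<^bsub>GZ r s\<^esub> (c,u,v) = ((\<lambda>j. if u j then - a' j else a' j), \<lambda>_. False, ea 0 k')"
    unfolding tst_def by (rule conjF[OF tauc])
  have cc2: "((\<lambda>j. if u j then - a' j else a' j), \<lambda>_. False, ea 0 k') \<in> carrier (GZ r s)"
    using g2 tauc unfolding tst_def GZ_carrier by auto
  have "\<phi> (tst a k \<otimes>\<^bsub>GZ r s\<^esub> inv\<^bsub>GZ r s\<^esub> (Tgen i \<otimes>\<^bsub>GZ r s\<^esub> tst a k \<otimes>\<^bsub>GZ r s\<^esub> inv\<^bsub>GZ r s\<^esub> Tgen i)) =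
     tst a' k' \<otimes>\<^bsub>GZ r s\<^esub> inv\<^bsub>GZ r s\<^esub> ((c,u,v) \<otimes>\<^bsub>GZ r s\<^esub> tst a' k' \<otimes>\<^bsub>GZ r s\<^esub> inv\<^bsub>GZ r s\<^esub> (c,u,v))"
    using g1 Ti eq tau by simp
  also have "\<dots> = ((\<lambda>j. a' j + (if u j then a' j else - a' j)), \<lambda>_. False, (\<lambda>_. 0))"
    unfolding cj2 using cc2 by (simp add: GZ_inv GZ_mult tst_def fun_eq_iff)
  finally have L: "\<phi> (tst a k \<otimes>\<^bsub>GZ r s\<^esub> inv\<^bsub>GZ r s\<^esub> (Tgen i \<otimes>\<^bsub>GZ r s\<^esub> tst a k \<otimes>\<^bsub>GZ r s\<^esub> inv\<^bsub>GZ r s\<^esub> Tgen i)) =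
     ((\<lambda>j. a' j + (if u j then a' j else - a' j)), \<lambda>_. False, (\<lambda>_. 0))" .
  have R: "\<phi> (Agen i [^]\<^bsub>GZ r s\<^esub> m) = ((\<lambda>j. int m * b j), \<lambda>_. False, (\<lambda>j. int m * w j))"
    using h.hom_nat_pow[OF Ac, of m] unfolding xA powF by simp
  have "((\<lambda>j. a' j + (if u j then a' j else - a' j)), \<lambda>_. False, (\<lambda>_. 0::int)) = ((\<lambda>j. int m * b j), \<lambda>_. False, (\<lambda>j. int m * w j))"
    using L R X by simp
  then have "a' j + (if u j then a' j else - a' j) = int m * b j" by (simp add: fun_eq_iff)
  moreover have "u j" using uj tau by simp
  moreover have "int m = 2 * a i" unfolding m_def using pos by simp
  ultimately have "a' j = a i * b j" by simp
  then show ?thesis using jr j uj cond2 xA by (intro exI[of _ j]) auto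
qed



lemma rig_Z:
  assumes phi: "\<phi> \<in> iso (GZ r s) (GZ r s)" and s: "0 < s"
    and g1: "tst a k \<in> carrier (GZ r s)" and g2: "tst a' k' \<in> carrier (GZ r s)"
    and eq: "\<phi> (tst a k) = tst a' k'" and pos: "k > 0" "k' > 0"
  shows "k \<le> k'"
proof -
  interpret h: group_hom "GZ r s" "GZ r s" \<phi> by (rule iso_group_hom[OF phi])
  have Zc: "Zgen \<in> carrier (GZ r s)" using s by (simp add: Zgen_def GZ_carrier ea_def)
  have Tc: "Tall r \<in> carrier (GZ r s)" by (simp add: Tall_def GZ_carrier)
  have "Qc r s (\<phi> Zgen)" using Qc_iso[OF phi Zc] Qc_Zgen unfolding Zgen_def by blast
  then have "fst (\<phi> Zgen) = (\<lambda>_. 0) \<and> fst (snd (\<phi> Zgen)) = (\<lambda>_. False)" using Qc_form[of "\<phi> Zgen" r s] Zc h.hom_closed by blast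
  then obtain w where xZ: "\<phi> Zgen = ((\<lambda>_. 0), \<lambda>_. False, w)" by (metis prod.collapse)
  define m where "m = nat (2 * k)"
  have a0: "\<forall>j\<ge>r. a j = 0" using g1 unfolding tst_def GZ_carrier by simp
  have cj1: "Tall r \<otimes>\<^bsub>GZ r s\<^esub> tst a k \<otimes>\<^bsub>GZ r s\<^esub> inv\<^bsub>GZ r s\<^esub> Tall r = ((\<lambda>j. if j < r then - a j else a j), \<lambda>_. False, ea 0 k)"
    unfolding tst_def Tall_def by (rule conjF) (use Tc in \<open>simp add: Tall_def\<close>)
  have X: "tst a k \<otimes>\<^bsub>GZ r s\<^esub> (Tall r \<otimes>\<^bsub>GZ r s\<^esub> tst a k \<otimes>\<^bsub>GZ r s\<^esub> inv\<^bsub>GZ r s\<^esub> Tall r) = Zgen [^]\<^bsub>GZ r s\<^esub> m"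
    unfolding cj1 Zgen_def powF using a0 pos
    by (auto simp: GZ_mult tst_def fun_eq_iff m_def ea_def)
  obtain c u v where tau: "\<phi> (Tall r) = (c,u,v)" by (cases "\<phi> (Tall r)")
  have tauc: "(c,u,v) \<in> carrier (GZ r s)" using Tc tau h.hom_closed by metis
  have cj2: "(c,u,v) \<otimes>\<^bsub>GZ r s\<^esub> tst a' k' \<otimes>\<^bsub>GZ r s\<^esub> inv\<^bsub>GZ r s\<^esub> (c,u,v) = ((\<lambda>j. if u j then - a' j else a' j), \<lambda>_. False, ea 0 k')"
    unfolding tst_def by (rule conjF[OF tauc])
  have "\<phi> (tst a k \<otimes>\<^bsub>GZ r s\<^esub> (Tall r \<otimes>\<^bsub>GZ r s\<^esub> tst a k \<otimes>\<^bsub>GZ r s\<^esub> inv\<^bsub>GZ r s\<^esub> Tall r)) =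
     tst a' k' \<otimes>\<^bsub>GZ r s\<^esub> ((c,u,v) \<otimes>\<^bsub>GZ r s\<^esub> tst a' k' \<otimes>\<^bsub>GZ r s\<^esub> inv\<^bsub>GZ r s\<^esub> (c,u,v))"
    using g1 Tc eq tau by simp
  also have "\<dots> = ((\<lambda>j. a' j + (if u j then - a' j else a' j)), \<lambda>_. False, (\<lambda>j. ea 0 k' j + ea 0 k' j))"
    unfolding cj2 by (simp add: GZ_mult tst_def)
  finally have L: "\<phi> (tst a k \<otimes>\<^bsub>GZ r s\<^esub> (Tall r \<otimes>\<^bsub>GZ r s\<^esub> tst a k \<otimes>\<^bsub>GZ r s\<^esub> inv\<^bsub>GZ r s\<^esub> Tall r)) =
     ((\<lambda>j. a' j + (if u j then - a' j else a' j)), \<lambda>_. False, (\<lambda>j. ea 0 k' j + ea 0 k' j))" .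
  have R: "\<phi> (Zgen [^]\<^bsub>GZ r s\<^esub> m) = ((\<lambda>j. int m * 0), \<lambda>_. False, (\<lambda>j. int m * w j))"
    using h.hom_nat_pow[OF Zc, of m] unfolding xZ powF by simp
  have "(\<lambda>j. ea 0 k' j + ea 0 k' j) = (\<lambda>j. int m * w j)"
    using L R X by simp
  then have "ea 0 k' 0 + ea 0 k' 0 = int m * w 0" by metis
  then have "2 * k' = 2 * k * w 0" unfolding m_def ea_def using pos by simp
  then have kw: "k' = k * w 0" by simp
  then have "w 0 \<ge> 1" using pos by (metis int_one_le_iff_zero_less zero_less_mult_pos)
  then show ?thesis using kw pos by (metis mult.right_neutral mult_left_mono order_less_imp_le)
qed

lemma perm_ge: fixes \<sigma> :: "nat \<Rightarrow> nat"
  assumes "\<sigma> ` {..<r} \<subseteq> {..<r}" "inj_on \<sigma> {..<r}" "\<forall>i<r. i \<le> \<sigma> i"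
  shows "\<forall>i<r. \<sigma> i = i"
proof (rule ccontr)
  assume "\<not> (\<forall>i<r. \<sigma> i = i)"
  then obtain i0 where i0: "i0 < r" "\<sigma> i0 \<noteq> i0" by blast
  have im: "\<sigma> ` {..<r} = {..<r}"
    using assms(1,2) by (simp add: card_image card_subset_eq)
  have "(\<Sum>i<r. \<sigma> i) = (\<Sum>j\<in>\<sigma> ` {..<r}. j)" using assms(2) by (simp add: sum.reindex)
  also have "\<dots> = (\<Sum>i<r. i)" using im by simp
  finally have e: "(\<Sum>i<r. \<sigma> i) = (\<Sum>i<r. i)" .
  have lt: "i0 < \<sigma> i0" using assms(3) i0 by (metis le_neq_implies_less)
  have h1: "\<forall>i\<in>{..<r}. i \<le> \<sigma> i" using assms(3) by auto
  have h2: "\<exists>i\<in>{..<r}. i < \<sigma> i" using lt i0 by auto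
  have "(\<Sum>i<r. i) < (\<Sum>i<r. \<sigma> i)"
    by (rule sum_strict_mono_ex1[OF finite_lessThan h1 h2])
  then show False using e by simp
qed



definition TA :: "nat \<Rightarrow> nat \<Rightarrow> (nat \<Rightarrow> int) set" where
  "TA r n = {a. (\<forall>i\<ge>r. a i = 0) \<and> (\<forall>i<r. int (i * n) < a i \<and> a i \<le> int ((i + 1) * n))}"

definition Tset :: "nat \<Rightarrow> nat \<Rightarrow> elem set" where
  "Tset r n = (\<lambda>(a,k). tst a k) ` (TA r n \<times> {1..int n})"

lemma tst_carrier: "0 < s \<Longrightarrow> a \<in> TA r n \<Longrightarrow> tst a k \<in> carrier (GZ r s)"
  by (auto simp: tst_def TA_def GZ_carrier ea_def)

lemma rig_half:
  assumes phi: "\<phi> \<in> iso (GZ r s) (GZ r s)" and s: "0 < s"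
    and a: "a \<in> TA r n" and a': "a' \<in> TA r n" and k: "1 \<le> k" and k': "1 \<le> k'"
    and eq: "\<phi> (tst a k) = tst a' k'"
  shows "(\<forall>i<r. a i \<le> a' i) \<and> k \<le> k'"
proof -
  have g1: "tst a k \<in> carrier (GZ r s)" and g2: "tst a' k' \<in> carrier (GZ r s)"
    using tst_carrier[OF s] a a' by auto
  have kk: "k \<le> k'" by (rule rig_Z[OF phi s g1 g2 eq]) (use k k' in auto)
  define P where "P i j = (j < r \<and> fst (\<phi> (Agen i)) j \<noteq> 0 \<and> fst (snd (\<phi> (Tgen i))) j
            \<and> (\<forall>l<r. l \<noteq> i \<longrightarrow> \<not> fst (snd (\<phi> (Tgen l))) j) \<and> a' j = a i * fst (\<phi> (Agen i)) j)" for i j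
  have apos: "a i > 0" if "i < r" for i using a that unfolding TA_def
    by (metis (no_types, lifting) mem_Collect_eq of_nat_0_le_iff order_le_less_trans)
  have a'pos: "a' i > 0" if "i < r" for i using a' that unfolding TA_def
    by (metis (no_types, lifting) mem_Collect_eq of_nat_0_le_iff order_le_less_trans)
  have ex: "\<exists>j. P i j" if "i < r" for i
    using rig_A[OF phi that g1 g2 eq apos[OF that]] unfolding P_def by blast
  define \<sigma> where "\<sigma> i = (SOME j. P i j)" for i
  have Ps: "P i (\<sigma> i)" if "i < r" for i unfolding \<sigma>_def using ex[OF that] by (rule someI_ex)
  have sub: "\<sigma> ` {..<r} \<subseteq> {..<r}" using Ps unfolding P_def by auto
  have inj: "inj_on \<sigma> {..<r}"
  proof (rule inj_onI)
    fix i i' assume i: "i \<in> {..<r}" "i' \<in> {..<r}" "\<sigma> i = \<sigma> i'"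
    show "i = i'"
    proof (rule ccontr)
      assume ne: "i \<noteq> i'"
      have "\<not> fst (snd (\<phi> (Tgen i'))) (\<sigma> i)" using Ps[of i] i ne unfolding P_def by auto
      moreover have "fst (snd (\<phi> (Tgen i'))) (\<sigma> i')" using Ps[of i'] i unfolding P_def by auto
      ultimately show False using i by simp
    qed
  qed
  have ge: "a i \<le> a' (\<sigma> i)" if "i < r" for i
  proof -
    let ?b = "fst (\<phi> (Agen i)) (\<sigma> i)"
    have "a' (\<sigma> i) = a i * ?b" "?b \<noteq> 0" "\<sigma> i < r" using Ps[OF that] unfolding P_def by auto
    moreover have "a' (\<sigma> i) > 0" using a'pos calculation(3) by blast
    moreover have "a i > 0" using apos that by blast
    ultimately have "?b \<ge> 1" by (metis int_one_le_iff_zero_less zero_less_mult_pos)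
    then show ?thesis using \<open>a' (\<sigma> i) = a i * ?b\<close> \<open>a i > 0\<close> by (simp add: mult_le_cancel_left1)
  qed
  have geq: "i \<le> \<sigma> i" if "i < r" for i
  proof -
    have sr: "\<sigma> i < r" using sub that by auto
    have "int (i * n) < a i" using a that unfolding TA_def by auto
    also have "\<dots> \<le> a' (\<sigma> i)" by (rule ge[OF that])
    also have "\<dots> \<le> int ((\<sigma> i + 1) * n)" using a' sr unfolding TA_def by auto
    finally have "i * n < (\<sigma> i + 1) * n" by linarith
    then have "i < \<sigma> i + 1" by (meson mult_less_cancel2)
    then show ?thesis by simp
  qed
  have "\<forall>i<r. \<sigma> i = i" by (rule perm_ge[OF sub inj]) (use geq in auto)
  then show ?thesis using ge kk by auto
qed

lemma rig_orbit:
  assumes s: "0 < s" and g1: "g1 \<in> Tset r n" and g2: "g2 \<in> Tset r n"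
    and eq: "aut_orbit (GZ r s) g1 = aut_orbit (GZ r s) g2"
  shows "g1 = g2"
proof -
  interpret group "GZ r s" by (rule GZ_group)
  obtain a k where ak: "g1 = tst a k" "a \<in> TA r n" "1 \<le> k" using g1 unfolding Tset_def by auto
  obtain a' k' where ak': "g2 = tst a' k'" "a' \<in> TA r n" "1 \<le> k'" using g2 unfolding Tset_def by auto
  have c1: "g1 \<in> carrier (GZ r s)" using ak tst_carrier[OF s] by auto
  have "g2 \<in> aut_orbit (GZ r s) g1" using eq aut_orbit_self by metis
  then obtain \<phi> where phi: "\<phi> \<in> iso (GZ r s) (GZ r s)" "\<phi> g1 = g2" unfolding aut_orbit_def by auto
  have psi: "inv_into (carrier (GZ r s)) \<phi> \<in> iso (GZ r s) (GZ r s)" using iso_set_sym phi(1) by blast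
  have "inv_into (carrier (GZ r s)) \<phi> g2 = g1" using phi c1 by (metis inv_into_f_f iso_iff)
  then have h1: "(\<forall>i<r. a i \<le> a' i) \<and> k \<le> k'" and h2: "(\<forall>i<r. a' i \<le> a i) \<and> k' \<le> k"
    using rig_half[OF phi(1) s ak(2) ak'(2) ak(3) ak'(3)] rig_half[OF psi s ak'(2) ak(2) ak'(3) ak(3)] phi(2) ak ak'
    by auto
  have "a = a'"
  proof
    fix i show "a i = a' i"
    proof (cases "i < r")
      case True then show ?thesis using h1 h2 by (meson order_antisym)
    next
      case False then show ?thesis using ak(2) ak'(2) unfolding TA_def by auto
    qed
  qed
  then show ?thesis using ak ak' h1 h2 by auto
qed

lemma card_TA: "card (TA r n) = n ^ r"
proof -
  let ?B = "PiE {..<r} (\<lambda>i. {int (i * n) + 1 .. int ((i + 1) * n)})"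
  have "bij_betw (\<lambda>a. restrict a {..<r}) (TA r n) ?B"
  proof (rule bij_betw_byWitness[where f'="\<lambda>g i. if i < r then g i else 0"])
    show "\<forall>a\<in>TA r n. (\<lambda>i. if i < r then restrict a {..<r} i else 0) = a"
      unfolding TA_def by (auto simp: fun_eq_iff)
    show "\<forall>a'\<in>?B. restrict (\<lambda>i. if i < r then a' i else 0) {..<r} = a'"
      by (auto simp: fun_eq_iff PiE_def extensional_def)
    show "(\<lambda>a. restrict a {..<r}) ` TA r n \<subseteq> ?B"
      unfolding TA_def by (auto simp: PiE_def)
    show "(\<lambda>g i. if i < r then g i else 0) ` ?B \<subseteq> TA r n"
      unfolding TA_def by (auto simp: PiE_def Pi_def)
  qed
  then have "card (TA r n) = card ?B" by (rule bij_betw_same_card)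
  also have "\<dots> = (\<Prod>i<r. card {int (i * n) + 1 .. int ((i + 1) * n)})" by (simp add: card_PiE)
  also have "\<dots> = (\<Prod>i<r. n)" by (rule prod.cong) auto
  finally show ?thesis by simp
qed

lemma finite_TA: "n > 0 \<Longrightarrow> finite (TA r n)"
  using card_TA[of r n] by (metis card.infinite power_not_zero not_gr0)

lemma card_Tset: "card (Tset r n) = n ^ (r + 1)"
proof (cases "n = 0")
  case True
  then show ?thesis unfolding Tset_def by simp
next
  case False
  have "inj_on (\<lambda>(a,k). tst a k) (TA r n \<times> {1..int n})"
    by (auto simp: inj_on_def tst_def ea_def fun_eq_iff)
  then have "card (Tset r n) = card (TA r n \<times> {1..int n})" unfolding Tset_def by (rule card_image)
  also have "\<dots> = n ^ r * n" using False finite_TA[of n r] by (simp add: card_cartesian_product card_TA)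
  finally show ?thesis by simp
qed

lemma nrm_tst: assumes "a \<in> TA r n" "1 \<le> k" "k \<le> int n" "0 < s"
  shows "nrm r s (tst a k) \<le> (r * r + 1) * n"
proof -
  have "(\<Sum>i<r. nat \<bar>a i\<bar>) \<le> (\<Sum>i<r. r * n)"
  proof (rule sum_mono)
    fix i assume i: "i \<in> {..<r}"
    have u: "a i \<le> int ((i + 1) * n)" and l: "int (i * n) < a i" using assms(1) i unfolding TA_def by auto
    have "i + 1 \<le> r" using i by simp
    then have "(i + 1) * n \<le> r * n" by (rule mult_right_mono) simp
    then have "int ((i + 1) * n) \<le> int (r * n)" by (simp only: of_nat_le_iff)
    then show "nat \<bar>a i\<bar> \<le> r * n" using u l by linarith
  qed
  then have s1: "(\<Sum>i<r. nat \<bar>a i\<bar>) \<le> r * (r * n)" by simp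
  have "(\<Sum>i<s. nat \<bar>ea 0 k i\<bar>) = (\<Sum>i<s. if i = 0 then nat \<bar>k\<bar> else 0)"
    by (rule sum.cong) (auto simp: ea_def)
  also have "\<dots> = nat \<bar>k\<bar>" using assms(4) by (simp add: sum.delta)
  finally have s2: "(\<Sum>i<s. nat \<bar>ea 0 k i\<bar>) \<le> n" using assms(2,3) by linarith
  have "nrm r s (tst a k) = (\<Sum>i<r. nat \<bar>a i\<bar>) + (\<Sum>i<s. nat \<bar>ea 0 k i\<bar>)"
    unfolding nrm_def tst_def by simp
  also have "\<dots> \<le> r * (r * n) + n" using s1 s2 by linarith
  also have "\<dots> = (r * r + 1) * n" by (simp add: algebra_simps)
  finally show ?thesis .
qed



definition PA :: "nat \<Rightarrow> int \<Rightarrow> (nat \<Rightarrow> int) set" where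
  "PA r M = {a. (\<forall>i\<ge>r. a i = 0) \<and> (\<forall>i<r. \<bar>a i\<bar> \<le> M)}"

definition TT :: "nat \<Rightarrow> (nat \<Rightarrow> bool) set" where
  "TT r = {t. \<forall>i\<ge>r. \<not> t i}"

lemma inj_fin_card: assumes "inj_on f A" "f ` A \<subseteq> B" "finite B"
  shows "finite A \<and> card A \<le> card B"
proof -
  have "finite (f ` A)" using assms(2,3) finite_subset by blast
  then have "finite A" using assms(1) finite_imageD by blast
  moreover have "card A \<le> card B" using card_inj_on_le assms by blast
  ultimately show ?thesis by blast
qed

lemma card_PA: assumes "0 \<le> M" shows "finite (PA r M) \<and> card (PA r M) \<le> nat (2 * M + 1) ^ r"
proof -
  let ?B = "PiE {..<r} (\<lambda>i. {-M..M})"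
  have "inj_on (\<lambda>a. restrict a {..<r}) (PA r M)"
    unfolding PA_def inj_on_def by (auto simp: fun_eq_iff) (metis not_le restrict_apply' lessThan_iff)
  moreover have "(\<lambda>a. restrict a {..<r}) ` PA r M \<subseteq> ?B" unfolding PA_def by (auto simp: PiE_def abs_le_iff)
  moreover have "finite ?B" by (simp add: finite_PiE)
  ultimately have "finite (PA r M) \<and> card (PA r M) \<le> card ?B" by (rule inj_fin_card)
  moreover have "card ?B = nat (2 * M + 1) ^ r" by (simp add: card_PiE)
  ultimately show ?thesis by simp
qed

lemma card_TT: "finite (TT r) \<and> card (TT r) \<le> 2 ^ r"
proof -
  have "inj_on (\<lambda>t. {i. t i}) (TT r)"
    unfolding inj_on_def by (auto simp: fun_eq_iff)
  moreover have "(\<lambda>t. {i. t i}) ` TT r \<subseteq> Pow {..<r}" unfolding TT_def by (auto simp: not_le[symmetric])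
  moreover have "finite (Pow {..<r})" by simp
  ultimately have "finite (TT r) \<and> card (TT r) \<le> card (Pow {..<r})" by (rule inj_fin_card)
  then show ?thesis by (simp add: card_Pow)
qed

lemma ball_cover:
  assumes s: "0 < s" and C: "\<forall>g\<in>carrier (GZ r s). nrm r s g \<le> C * wordlen (GZ r s) S g"
  shows "aut_orbit (GZ r s) ` {g \<in> carrier (GZ r s). wordlen (GZ r s) S g \<le> m} \<subseteq>
     (\<lambda>(a,t,d). aut_orbit (GZ r s) (a, t, (\<lambda>k. if k = 0 then d else 0))) `
        (PA r (int (C * m)) \<times> TT r \<times> {0..int (C * m)})"
proof
  fix Ob assume "Ob \<in> aut_orbit (GZ r s) ` {g \<in> carrier (GZ r s). wordlen (GZ r s) S g \<le> m}"
  then obtain g where g: "g \<in> carrier (GZ r s)" "wordlen (GZ r s) S g \<le> m" "Ob = aut_orbit (GZ r s) g" by blast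
  obtain a t z where gt: "g = (a,t,z)" by (cases g)
  have nb: "nrm r s g \<le> C * m" using C g(1,2) by (meson le_trans mult_le_mono2)
  obtain d where d: "0 \<le> d" "d \<le> (\<Sum>k<s. \<bar>z k\<bar>)" "(a,t,(\<lambda>k. if k = 0 then d else 0)) \<in> aut_orbit (GZ r s) (a,t,z)"
    using z_reduce[OF s g(1)[unfolded gt]] by blast
  have eqO: "aut_orbit (GZ r s) (a,t,(\<lambda>k. if k = 0 then d else 0)) = Ob"
    using aut_orbit_eq[OF GZ_group g(1)[unfolded gt] d(3)] g(3) gt by simp
  have "(\<Sum>k<s. \<bar>z k\<bar>) = int (\<Sum>k<s. nat \<bar>z k\<bar>)" by (simp add: of_nat_sum)
  also have "(\<Sum>k<s. nat \<bar>z k\<bar>) \<le> nrm r s g" unfolding gt nrm_def by simp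
  finally have dM: "d \<le> int (C * m)" using d(2) nb by linarith
  have aM: "\<bar>a i\<bar> \<le> int (C * m)" if "i < r" for i
  proof -
    have "nat \<bar>a i\<bar> \<le> (\<Sum>i<r. nat \<bar>a i\<bar>)" using that by (intro member_le_sum) auto
    also have "\<dots> \<le> nrm r s g" unfolding gt nrm_def by simp
    finally show ?thesis using nb by linarith
  qed
  have "a \<in> PA r (int (C * m))" "t \<in> TT r" using g(1) aM unfolding gt PA_def TT_def GZ_carrier by auto
  then show "Ob \<in> (\<lambda>(a,t,d). aut_orbit (GZ r s) (a, t, (\<lambda>k. if k = 0 then d else 0))) `
        (PA r (int (C * m)) \<times> TT r \<times> {0..int (C * m)})"
    using eqO d(1) dM by (intro image_eqI[of _ _ "(a,t,d)"]) auto
qed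

lemma upper_count:
  assumes s: "0 < s" and C: "\<forall>g\<in>carrier (GZ r s). nrm r s g \<le> C * wordlen (GZ r s) S g"
  shows "finite (aut_orbit (GZ r s) ` {g \<in> carrier (GZ r s). wordlen (GZ r s) S g \<le> m}) \<and>
     autgrowth (GZ r s) S m \<le> (2 * C * m + 1) ^ r * 2 ^ r * (C * m + 1)"
proof -
  let ?P = "PA r (int (C * m)) \<times> TT r \<times> {0..int (C * m)}"
  let ?f = "(\<lambda>(a,t,d). aut_orbit (GZ r s) (a, t, (\<lambda>k. if k = 0 then d else 0)))"
  have pa: "finite (PA r (int (C * m)))" "card (PA r (int (C * m))) \<le> nat (2 * int (C * m) + 1) ^ r"
    using card_PA[of "int (C * m)" r] by auto
  have tt: "finite (TT r)" "card (TT r) \<le> 2 ^ r" using card_TT[of r] by auto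
  have fP: "finite ?P" using pa tt by simp
  have c0: "card {0..int (C * m)} = C * m + 1"
    by (metis card_atLeastAtMost_int diff_zero nat_int of_nat_Suc Suc_eq_plus1 add.commute)
  have "card ?P = card (PA r (int (C * m))) * (card (TT r) * (C * m + 1))"
    unfolding card_cartesian_product c0 ..
  also have "\<dots> \<le> nat (2 * int (C * m) + 1) ^ r * (2 ^ r * (C * m + 1))"
    using pa tt by (intro mult_mono) auto
  also have "nat (2 * int (C * m) + 1) = 2 * C * m + 1" by (simp add: nat_add_distrib nat_mult_distrib)
  finally have cP: "card ?P \<le> (2 * C * m + 1) ^ r * 2 ^ r * (C * m + 1)" by (simp only: mult.assoc)
  have sub: "aut_orbit (GZ r s) ` {g \<in> carrier (GZ r s). wordlen (GZ r s) S g \<le> m} \<subseteq> ?f ` ?P"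
    by (rule ball_cover[OF s C])
  have fin: "finite (?f ` ?P)" using fP by simp
  have "autgrowth (GZ r s) S m \<le> card (?f ` ?P)" unfolding autgrowth_def by (rule card_mono[OF fin sub])
  also have "\<dots> \<le> card ?P" by (rule card_image_le[OF fP])
  finally show ?thesis using cP finite_subset[OF sub fin] by linarith
qed

lemma pow_arith: fixes X Y z :: nat shows "(X * Y) ^ r * z * (X * Y) = (z * X ^ (r + 1)) * Y ^ (r + 1)"
  by (simp add: power_mult_distrib mult_ac)

lemma growth_upper: assumes s: "0 < s" and S: "gen_set (GZ r s) S"
  shows "growth_le (autgrowth (GZ r s) S) (\<lambda>n. n ^ (r + 1))"
proof -
  obtain C where C: "\<forall>g\<in>carrier (GZ r s). nrm r s g \<le> C * wordlen (GZ r s) S g"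
    using wordlen_lower[OF S] by blast
  define c where "c = 2 ^ r * (2 * C + 1) ^ (r + 1) + 1"
  have c1: "c \<ge> 1" unfolding c_def by simp
  show ?thesis unfolding growth_le_def
  proof (intro exI conjI allI)
    show "c \<noteq> 0" using c1 by simp
    fix n
    have "autgrowth (GZ r s) S n \<le> (2 * C * n + 1) ^ r * 2 ^ r * (C * n + 1)"
      using upper_count[OF s C] by blast
    also have "\<dots> \<le> ((2 * C + 1) * (n + 1)) ^ r * 2 ^ r * ((2 * C + 1) * (n + 1))"
    proof (intro mult_mono power_mono)
      show "2 * C * n + 1 \<le> (2 * C + 1) * (n + 1)" by (simp add: algebra_simps)
      show "C * n + 1 \<le> (2 * C + 1) * (n + 1)" by (simp add: algebra_simps)
    qed auto
    also have "\<dots> = (2 ^ r * (2 * C + 1) ^ (r + 1)) * (n + 1) ^ (r + 1)"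
      by (rule pow_arith)
    also have "\<dots> \<le> c * (n + 1) ^ (r + 1)" unfolding c_def by simp
    also have "\<dots> \<le> c * (c * n + c) ^ (r + 1)"
    proof -
      have "n + 1 \<le> c * n + c" using c1
        by (metis add_mono mult.commute mult_1 mult_le_mono2 nat_mult_1_right)
      then show ?thesis by (intro mult_le_mono2 power_mono) auto
    qed
    finally show "autgrowth (GZ r s) S n \<le> c * (c * n + c) ^ (r + 1) + c" by linarith
  qed
qed

lemma growth_lower: assumes s: "0 < s" and S: "gen_set (GZ r s) S"
  shows "growth_le (\<lambda>n. n ^ (r + 1)) (autgrowth (GZ r s) S)"
proof -
  obtain C where C: "\<forall>g\<in>carrier (GZ r s). nrm r s g \<le> C * wordlen (GZ r s) S g"
    using wordlen_lower[OF S] by blast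
  obtain L where L: "\<forall>g\<in>carrier (GZ r s). wordlen (GZ r s) S g \<le> L * (nrm r s g + r)"
    using wordlen_upper[OF S] by blast
  define c where "c = L * (r * r + 1) + L * r + 1"
  show ?thesis unfolding growth_le_def
  proof (intro exI conjI allI)
    show "c \<noteq> 0" unfolding c_def by simp
    fix n
    let ?B = "{g \<in> carrier (GZ r s). wordlen (GZ r s) S g \<le> c * n + c}"
    have sub: "Tset r n \<subseteq> ?B"
    proof
      fix g assume "g \<in> Tset r n"
      then obtain a k where ak: "g = tst a k" "a \<in> TA r n" "1 \<le> k" "k \<le> int n" unfolding Tset_def by auto
      have gc: "g \<in> carrier (GZ r s)" using tst_carrier[OF s ak(2)] ak(1) by simp
      have "wordlen (GZ r s) S g \<le> L * (nrm r s g + r)" using L gc by blast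
      also have "\<dots> \<le> L * ((r * r + 1) * n + r)" using nrm_tst[OF ak(2-4) s] ak(1) by simp
      also have "\<dots> \<le> c * n + c" unfolding c_def by (simp add: algebra_simps)
      finally show "g \<in> ?B" using gc by simp
    qed
    have inj: "inj_on (aut_orbit (GZ r s)) (Tset r n)"
      by (rule inj_onI) (rule rig_orbit[OF s])
    have fin: "finite (aut_orbit (GZ r s) ` ?B)" using upper_count[OF s C] by blast
    have "n ^ (r + 1) = card (Tset r n)" by (simp add: card_Tset)
    also have "\<dots> = card (aut_orbit (GZ r s) ` Tset r n)" by (rule card_image[OF inj, symmetric])
    also have "\<dots> \<le> card (aut_orbit (GZ r s) ` ?B)" by (rule card_mono[OF fin]) (use sub in blast)
    also have "\<dots> = autgrowth (GZ r s) S (c * n + c)" unfolding autgrowth_def ..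
    also have "\<dots> \<le> c * autgrowth (GZ r s) S (c * n + c) + c" unfolding c_def by simp
    finally show "n ^ (r + 1) \<le> c * autgrowth (GZ r s) S (c * n + c) + c" .
  qed
qed

lemma growth_main: "0 < s \<Longrightarrow> gen_set (GZ r s) S \<Longrightarrow> growth_equiv (autgrowth (GZ r s) S) (\<lambda>n. n ^ (r + 1))"
  unfolding growth_equiv_def using growth_upper growth_lower by blast



definition H0 :: "nat \<Rightarrow> nat \<Rightarrow> elem set" where
  "H0 r s = {g \<in> carrier (GZ r s). fst (snd g) = (\<lambda>_. False)}"

lemma H0_subgroup: "subgroup (H0 r s) (GZ r s)"
proof -
  interpret group "GZ r s" by (rule GZ_group)
  show ?thesis
  proof (rule subgroupI)
    show "H0 r s \<subseteq> carrier (GZ r s)" unfolding H0_def by auto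
    show "H0 r s \<noteq> {}" unfolding H0_def using one_closed by (auto simp: GZ_one)
    fix a assume "a \<in> H0 r s"
    then show "inv\<^bsub>GZ r s\<^esub> a \<in> H0 r s" unfolding H0_def by (cases a) (auto simp: GZ_inv GZ_carrier)
  next
    fix a b assume "a \<in> H0 r s" "b \<in> H0 r s"
    then show "a \<otimes>\<^bsub>GZ r s\<^esub> b \<in> H0 r s" unfolding H0_def by (cases a; cases b) (auto simp: GZ_mult GZ_carrier)
  qed
qed

lemma H0_rcosets: "finite (rcosets\<^bsub>GZ r s\<^esub> H0 r s)"
proof -
  interpret group "GZ r s" by (rule GZ_group)
  have "rcosets\<^bsub>GZ r s\<^esub> H0 r s \<subseteq> (\<lambda>t. H0 r s #>\<^bsub>GZ r s\<^esub> ((\<lambda>_. 0), t, (\<lambda>_. 0))) ` TT r"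
  proof
    fix X assume "X \<in> rcosets\<^bsub>GZ r s\<^esub> H0 r s"
    then obtain x where x: "x \<in> carrier (GZ r s)" "X = H0 r s #>\<^bsub>GZ r s\<^esub> x" unfolding RCOSETS_def by blast
    obtain a t z where xe: "x = (a,t,z)" by (cases x)
    have tc: "((\<lambda>_. 0), t, (\<lambda>_. 0)) \<in> carrier (GZ r s)" using x xe by (simp add: GZ_carrier)
    have hm: "(a, \<lambda>_. False, z) \<in> H0 r s" using x xe by (simp add: H0_def GZ_carrier)
    have "x \<in> H0 r s #>\<^bsub>GZ r s\<^esub> ((\<lambda>_. 0), t, (\<lambda>_. 0))"
      unfolding r_coset_def using hm xe by (auto simp: GZ_mult intro!: bexI[of _ "(a, \<lambda>_. False, z)"])
    then have "H0 r s #>\<^bsub>GZ r s\<^esub> ((\<lambda>_. 0), t, (\<lambda>_. 0)) = H0 r s #>\<^bsub>GZ r s\<^esub> x"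
      by (rule repr_independence[OF _ tc H0_subgroup])
    moreover have "t \<in> TT r" using x xe by (simp add: GZ_carrier TT_def)
    ultimately show "X \<in> (\<lambda>t. H0 r s #>\<^bsub>GZ r s\<^esub> ((\<lambda>_. 0), t, (\<lambda>_. 0))) ` TT r" using x by auto
  qed
  then show ?thesis using card_TT[of r] finite_subset by blast
qed

lemma H0_iso: "(GZ r s)\<lparr>carrier := H0 r s\<rparr> \<cong> Zpow (r + s)"
proof -
  let ?f = "\<lambda>g::elem. (\<lambda>i. if i < r then fst g i else snd (snd g) (i - r))"
  have "?f \<in> iso ((GZ r s)\<lparr>carrier := H0 r s\<rparr>) (Zpow (r + s))"
  proof (rule isoI)
    show "?f \<in> hom ((GZ r s)\<lparr>carrier := H0 r s\<rparr>) (Zpow (r + s))"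
      unfolding hom_def
    proof (intro CollectI conjI ballI)
      show "?f \<in> carrier ((GZ r s)\<lparr>carrier := H0 r s\<rparr>) \<rightarrow> carrier (Zpow (r + s))"
        by (auto simp: H0_def GZ_carrier Zpow_def)
      fix x y assume "x \<in> carrier ((GZ r s)\<lparr>carrier := H0 r s\<rparr>)" "y \<in> carrier ((GZ r s)\<lparr>carrier := H0 r s\<rparr>)"
      then show "?f (x \<otimes>\<^bsub>(GZ r s)\<lparr>carrier := H0 r s\<rparr>\<^esub> y) = ?f x \<otimes>\<^bsub>Zpow (r + s)\<^esub> ?f y"
        by (cases x; cases y) (auto simp: H0_def GZ_mult Zpow_def fun_eq_iff)
    qed
    show "bij_betw ?f (carrier ((GZ r s)\<lparr>carrier := H0 r s\<rparr>)) (carrier (Zpow (r + s)))"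
    proof (rule bij_betw_byWitness[where f'="\<lambda>v. ((\<lambda>i. if i < r then v i else 0), (\<lambda>_. False), (\<lambda>j. if j < s then v (j + r) else 0))"])
      show "\<forall>a\<in>carrier ((GZ r s)\<lparr>carrier := H0 r s\<rparr>).
          ((\<lambda>i. if i < r then ?f a i else 0), (\<lambda>_. False), (\<lambda>j. if j < s then ?f a (j + r) else 0)) = a"
        by (auto simp: H0_def GZ_carrier fun_eq_iff)
      show "\<forall>v\<in>carrier (Zpow (r + s)).
          ?f ((\<lambda>i. if i < r then v i else 0), (\<lambda>_. False), (\<lambda>j. if j < s then v (j + r) else 0)) = v"
        by (auto simp: Zpow_def fun_eq_iff)
      show "?f ` carrier ((GZ r s)\<lparr>carrier := H0 r s\<rparr>) \<subseteq> carrier (Zpow (r + s))"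
        by (auto simp: H0_def GZ_carrier Zpow_def)
      show "(\<lambda>v. ((\<lambda>i. if i < r then v i else 0), (\<lambda>_. False), (\<lambda>j. if j < s then v (j + r) else 0))) `
          carrier (Zpow (r + s)) \<subseteq> carrier ((GZ r s)\<lparr>carrier := H0 r s\<rparr>)"
        by (auto simp: H0_def GZ_carrier Zpow_def)
    qed
  qed
  then show ?thesis unfolding is_iso_def by blast
qed

lemma GZ_rank: "virt_abelian_rank (GZ r s) (r + s)"
  unfolding virt_abelian_rank_def using GZ_group H0_subgroup H0_rcosets H0_iso by blast

theorem mainTheorem1:
  shows "(\<forall>r s S. 0 < r \<longrightarrow> 0 < s \<longrightarrow> gen_set (GZ r s) S \<longrightarrow>
            growth_equiv (autgrowth (GZ r s) S) (\<lambda>n. n ^ (r + 1)))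
       \<and> (\<forall>m k. 0 < k \<longrightarrow> k \<le> m \<longrightarrow>
            (\<exists>H :: elem monoid. virt_abelian_rank H m \<and> (\<exists>S. gen_set H S) \<and>
               (\<forall>S. gen_set H S \<longrightarrow> growth_equiv (autgrowth H S) (\<lambda>n. n ^ k))))"
proof (intro conjI allI impI)
  fix r s S assume "0 < (r::nat)" "0 < (s::nat)" "gen_set (GZ r s) S"
  then show "growth_equiv (autgrowth (GZ r s) S) (\<lambda>n. n ^ (r + 1))" using growth_main by blast
next
  fix m k :: nat assume k: "0 < k" "k \<le> m"
  let ?r = "k - 1" and ?s = "m - k + 1"
  have rs: "?r + ?s = m" using k by simp
  have kk: "?r + 1 = k" using k by simp
  show "\<exists>H :: elem monoid. virt_abelian_rank H m \<and> (\<exists>S. gen_set H S) \<and>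
               (\<forall>S. gen_set H S \<longrightarrow> growth_equiv (autgrowth H S) (\<lambda>n. n ^ k))"
  proof (rule exI[of _ "GZ ?r ?s"], intro conjI allI impI)
    show "virt_abelian_rank (GZ ?r ?s) m" using GZ_rank[of ?r ?s] rs by simp
    show "\<exists>S. gen_set (GZ ?r ?s) S" using gen_set_S0 by blast
    fix S assume "gen_set (GZ ?r ?s) S"
    then show "growth_equiv (autgrowth (GZ ?r ?s) S) (\<lambda>n. n ^ k)" using growth_main[of ?s ?r S] kk by simp
  qed
qed

end
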